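(* Under the standing assumptions below, let $x_0\in\mathbb R$ be a Lebesgue point of both $p$ and $w$. Then $$\lim_{J\downarrow x_0}\lambda(J)\,\mathcal L(J)^2=\frac{\pi^2}{s(x_0)^2},$$ where the limit is taken over nonempty bounded open intervals $J$ with $x_0\in\overline J$ and $\mathcal L(J)\to0$, and $s(x_0)=\sqrt{w(x_0)/p(x_0)}$.
   Context: Standing assumptions: $1<\beta<\infty$; $q\in L^\infty(\mathbb R)$ with $0\le q\le\beta$ a.e.; $p,w\in L^\infty(\mathbb R)$ with $1/\beta\le p\le\beta$ and $1/\beta\le w\le\beta$ a.e.; $s:=\sqrt{w/p}$. For a nonempty bounded open interval $J$, $\lambda(J)=\min_{u\in H^1_0(J),u\ne0}\frac{\int_J p u'^2\,dx+\int_J q u^2\,dx}{\int_J w u^2\,dx}$. $\mathcal L$ denotes Lebesgue measure. *)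

theory Defs
  imports "HOL-Analysis.Analysis"
begin

definition lebesgue_point :: "(real \<Rightarrow> real) \<Rightarrow> real \<Rightarrow> bool" where
  "lebesgue_point f x0 \<longleftrightarrow>
     ((\<lambda>r. (1 / (2 * r)) * (LINT t:{x0 - r..x0 + r}|lebesgue. \<bar>f t - f x0\<bar>))
        \<longlongrightarrow> 0) (at_right 0)"

text \<open>H^1_0(a,b) in one dimension, via the (absolutely) continuous representative:
  pairs (u, g) where g is the weak derivative u', g \<in> L^2(a,b),
  u x = integral of g over [a,x] for x in [a,b] (so u a = 0), and u b = 0.\<close>
definition H10 :: "real \<Rightarrow> real \<Rightarrow> ((real \<Rightarrow> real) \<times> (real \<Rightarrow> real)) set" where
  "H10 a b = {(u, g). g \<in> borel_measurable lebesgue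
       \<and> set_integrable lebesgue {a<..<b} g
       \<and> set_integrable lebesgue {a<..<b} (\<lambda>x. (g x)\<^sup>2)
       \<and> (\<forall>x\<in>{a..b}. u x = (LINT t:{a..x}|lebesgue. g t))
       \<and> u b = 0}"

definition rayleigh ::
  "(real \<Rightarrow> real) \<Rightarrow> (real \<Rightarrow> real) \<Rightarrow> (real \<Rightarrow> real) \<Rightarrow> real \<Rightarrow> real
     \<Rightarrow> (real \<Rightarrow> real) \<Rightarrow> (real \<Rightarrow> real) \<Rightarrow> real" where
  "rayleigh p q w a b u g =
     ((LINT x:{a<..<b}|lebesgue. p x * (g x)\<^sup>2) + (LINT x:{a<..<b}|lebesgue. q x * (u x)\<^sup>2))
     / (LINT x:{a<..<b}|lebesgue. w x * (u x)\<^sup>2)"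

text \<open>The principal eigenvalue lambda(J) for J = (a,b): the minimum (= infimum,
  which is attained) of the Rayleigh quotient over nonzero u in H^1_0(J).
  Since u is continuous, u \<noteq> 0 in L^2 iff u does not vanish identically on (a,b).\<close>
definition lambdaJ ::
  "(real \<Rightarrow> real) \<Rightarrow> (real \<Rightarrow> real) \<Rightarrow> (real \<Rightarrow> real) \<Rightarrow> real \<Rightarrow> real \<Rightarrow> real" where
  "lambdaJ p q w a b =
     Inf {rayleigh p q w a b u g | u g. (u, g) \<in> H10 a b \<and> (\<exists>x\<in>{a<..<b}. u x \<noteq> 0)}"

end

theory Submission
  imports Defs
begin

lemma pred_snd_atMost_fst[measurable]: "Measurable.pred (borel \<Otimes>\<^sub>M borel) (\<lambda>x::real\<times>real. snd x \<in> {..fst x})"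
  by (simp add: atMost_iff) measurable

lemma pred_snd_atLeast_fst[measurable]: "Measurable.pred (borel \<Otimes>\<^sub>M borel) (\<lambda>x::real\<times>real. snd x \<in> {fst x..})"
  by (simp add: atLeast_iff) measurable

lemma swap_core:
  fixes f g :: "real \<Rightarrow> real"
  assumes f: "integrable lborel f" and g: "integrable lborel g"
  shows "(\<integral>x. f x * (\<integral>s. g s * indicator {..x} s \<partial>lborel) \<partial>lborel)
       = (\<integral>s. g s * (\<integral>x. f x * indicator {s..} x \<partial>lborel) \<partial>lborel)"
proof -
  have fm[measurable]: "f \<in> borel_measurable borel" using f by auto
  have gm[measurable]: "g \<in> borel_measurable borel" using g by auto
  define h where "h = (\<lambda>(x::real,s::real). if s \<le> x then f x * g s else 0)"
  have hm[measurable]: "h \<in> borel_measurable (lborel \<Otimes>\<^sub>M lborel)"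
    unfolding h_def by measurable
  have hint: "integrable (lborel \<Otimes>\<^sub>M lborel) h"
  proof (rule lborel_pair.Fubini_integrable[OF hm])
    have "integrable lborel (\<lambda>x. \<bar>f x\<bar> * (\<integral>s. \<bar>g s\<bar> * indicator {..x} s \<partial>lborel))"
    proof (rule Bochner_Integration.integrable_bound[where f="\<lambda>x. \<bar>f x\<bar> * (\<integral>s. \<bar>g s\<bar> \<partial>lborel)"])
      show "integrable lborel (\<lambda>x. \<bar>f x\<bar> * (\<integral>s. \<bar>g s\<bar> \<partial>lborel))" using f by auto
      show "(\<lambda>x. \<bar>f x\<bar> * (\<integral>s. \<bar>g s\<bar> * indicator {..x} s \<partial>lborel)) \<in> borel_measurable lborel"
        by measurable
      show "AE x in lborel. norm (\<bar>f x\<bar> * (\<integral>s. \<bar>g s\<bar> * indicator {..x} s \<partial>lborel)) \<le> norm (\<bar>f x\<bar> * (\<integral>s. \<bar>g s\<bar> \<partial>lborel))"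
      proof (rule AE_I2)
        fix x
        have i1: "integrable lborel (\<lambda>s. \<bar>g s\<bar> * indicator {..x} s)"
          using g by (intro integrable_real_mult_indicator) auto
        have "0 \<le> (\<integral>s. \<bar>g s\<bar> * indicator {..x} s \<partial>lborel)" by (intro integral_nonneg_AE) (auto simp: indicator_def)
        moreover have "(\<integral>s. \<bar>g s\<bar> * indicator {..x} s \<partial>lborel) \<le> (\<integral>s. \<bar>g s\<bar> \<partial>lborel)"
          using i1 g by (intro integral_mono) (auto simp: indicator_def)
        ultimately show "norm (\<bar>f x\<bar> * (\<integral>s. \<bar>g s\<bar> * indicator {..x} s \<partial>lborel)) \<le> norm (\<bar>f x\<bar> * (\<integral>s. \<bar>g s\<bar> \<partial>lborel))"
          by (auto simp: abs_mult intro!: mult_left_mono)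
      qed
    qed
    moreover have "\<And>x. (\<integral>s. norm (h (x, s)) \<partial>lborel) = \<bar>f x\<bar> * (\<integral>s. \<bar>g s\<bar> * indicator {..x} s \<partial>lborel)"
    proof -
      fix x
      have "(\<integral>s. norm (h (x, s)) \<partial>lborel) = (\<integral>s. \<bar>f x\<bar> * (\<bar>g s\<bar> * indicator {..x} s) \<partial>lborel)"
        unfolding h_def by (intro Bochner_Integration.integral_cong) (auto simp: indicator_def abs_mult)
      also have "\<dots> = \<bar>f x\<bar> * (\<integral>s. \<bar>g s\<bar> * indicator {..x} s \<partial>lborel)"
        by (rule integral_mult_right_zero)
      finally show "(\<integral>s. norm (h (x, s)) \<partial>lborel) = \<bar>f x\<bar> * (\<integral>s. \<bar>g s\<bar> * indicator {..x} s \<partial>lborel)" .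
    qed
    ultimately show "integrable lborel (\<lambda>x. \<integral>s. norm (h (x, s)) \<partial>lborel)"
      by simp
    show "AE x in lborel. integrable lborel (\<lambda>s. h (x, s))"
    proof (rule AE_I2)
      fix x
      have "integrable lborel (\<lambda>s. f x * (g s * indicator {..x} s))"
        using g by (intro integrable_mult_right integrable_real_mult_indicator) auto
      then show "integrable lborel (\<lambda>s. h (x, s))"
        unfolding h_def by (rule Bochner_Integration.integrable_cong[THEN iffD1, rotated -1]) (auto simp: indicator_def)
    qed
  qed
  have "(\<integral>x. f x * (\<integral>s. g s * indicator {..x} s \<partial>lborel) \<partial>lborel) = (\<integral>x. (\<integral>s. h (x,s) \<partial>lborel) \<partial>lborel)"
    unfolding h_def
    by (intro Bochner_Integration.integral_cong refl, subst integral_mult_right_zero[symmetric],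
        intro Bochner_Integration.integral_cong) (auto simp: indicator_def)
  also have "\<dots> = (\<integral>s. (\<integral>x. h (x,s) \<partial>lborel) \<partial>lborel)"
    using lborel_pair.Fubini_integral[of "\<lambda>x s. h (x,s)"] hint by simp
  also have "\<dots> = (\<integral>s. g s * (\<integral>x. f x * indicator {s..} x \<partial>lborel) \<partial>lborel)"
    unfolding h_def
    by (intro Bochner_Integration.integral_cong refl, subst integral_mult_right_zero[symmetric],
        intro Bochner_Integration.integral_cong) (auto simp: indicator_def)
  finally show ?thesis .
qed
lemma id_leb_measurable: "(\<lambda>x::real. x) \<in> borel_measurable lebesgue"
  by (rule measurable_completion) simp

lemma borel_version:
  fixes A :: "real \<Rightarrow> real"
  assumes "set_integrable lebesgue {a..b} A"
  obtains A2 where "integrable lborel A2" "AE x in lebesgue. indicator {a..b} x * A x = A2 x"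
proof -
  have i: "integrable lebesgue (\<lambda>x. indicator {a..b} x * A x)"
    using assms by (simp add: set_integrable_def)
  then have "(\<lambda>x. indicator {a..b} x * A x) \<in> borel_measurable (completion lborel)" by auto
  from completion_ex_borel_measurable_real[OF this] obtain A2 where
    A2: "A2 \<in> borel_measurable lborel" "AE x in lborel. indicator {a..b} x * A x = A2 x" by blast
  have ae: "AE x in lebesgue. indicator {a..b} x * A x = A2 x" using A2(2) by (rule AE_completion)
  have "integrable lebesgue A2" using i ae A2(1)
    by (subst integrable_cong_AE[where g="\<lambda>x. indicator {a..b} x * A x"]) (auto simp: eq_commute intro: measurable_completion)
  then have "integrable lborel A2" using A2(1) integrable_completion by blast
  then show ?thesis using ae that by blast
qed

lemma swap_interval:
  fixes A B :: "real \<Rightarrow> real"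
  assumes A: "set_integrable lebesgue {a..b} A" and B: "set_integrable lebesgue {a..b} B"
  shows "(LINT x:{a..b}|lebesgue. A x * (LINT s:{a..x}|lebesgue. B s))
       = (LINT s:{a..b}|lebesgue. B s * (LINT x:{s..b}|lebesgue. A x))"
proof -
  obtain A2 where A2: "integrable lborel A2" "AE x in lebesgue. indicator {a..b} x * A x = A2 x"
    using borel_version[OF A] by blast
  obtain B2 where B2: "integrable lborel B2" "AE x in lebesgue. indicator {a..b} x * B x = B2 x"
    using borel_version[OF B] by blast
  have Am[measurable]: "(\<lambda>x. indicator {a..b} x * A x) \<in> borel_measurable lebesgue"
    using A by (auto simp: set_integrable_def)
  have Bm[measurable]: "(\<lambda>x. indicator {a..b} x * B x) \<in> borel_measurable lebesgue"
    using B by (auto simp: set_integrable_def)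
  have A2m[measurable]: "A2 \<in> borel_measurable borel" using A2(1) by auto
  have A2l[measurable]: "A2 \<in> borel_measurable lebesgue" using A2(1) by (auto intro: measurable_completion)
  have B2l[measurable]: "B2 \<in> borel_measurable lebesgue" using B2(1) by (auto intro: measurable_completion)
  have B2m[measurable]: "B2 \<in> borel_measurable borel" using B2(1) by auto
  have inner1: "(LINT s:{a..x}|lebesgue. B s) = (\<integral>s. B2 s * indicator {..x} s \<partial>lborel)" if "x \<le> b" for x
  proof -
    have "(LINT s:{a..x}|lebesgue. B s) = (\<integral>s. indicator {..x} s * (indicator {a..b} s * B s) \<partial>lebesgue)"
      unfolding set_lebesgue_integral_def using that
      by (intro Bochner_Integration.integral_cong) (auto simp: indicator_def)
    also have "\<dots> = (\<integral>s. B2 s * indicator {..x} s \<partial>lebesgue)"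
    proof (rule integral_cong_AE)
      note id_leb_measurable[measurable]
      show "(\<lambda>s. indicator {..x} s * (indicator {a..b} s * B s)) \<in> borel_measurable lebesgue"
        by (intro borel_measurable_times Bm borel_measurable_indicator) auto
      show "(\<lambda>s. B2 s * indicator {..x} s) \<in> borel_measurable lebesgue" by measurable
      show "AE s in lebesgue. indicator {..x} s * (indicator {a..b} s * B s) = B2 s * indicator {..x} s"
        using B2(2) by (elim eventually_mono) simp
    qed
    also have "\<dots> = (\<integral>s. B2 s * indicator {..x} s \<partial>lborel)"
      by (intro integral_completion) measurable
    finally show ?thesis .
  qed
  have inner2: "(LINT x:{s..b}|lebesgue. A x) = (\<integral>x. A2 x * indicator {s..} x \<partial>lborel)" if "a \<le> s" for s
  proof -
    have "(LINT x:{s..b}|lebesgue. A x) = (\<integral>x. indicator {s..} x * (indicator {a..b} x * A x) \<partial>lebesgue)"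
      unfolding set_lebesgue_integral_def using that
      by (intro Bochner_Integration.integral_cong) (auto simp: indicator_def)
    also have "\<dots> = (\<integral>x. A2 x * indicator {s..} x \<partial>lebesgue)"
    proof (rule integral_cong_AE)
      note id_leb_measurable[measurable]
      show "(\<lambda>x. indicator {s..} x * (indicator {a..b} x * A x)) \<in> borel_measurable lebesgue"
        by (intro borel_measurable_times Am borel_measurable_indicator) auto
      show "(\<lambda>x. A2 x * indicator {s..} x) \<in> borel_measurable lebesgue" by measurable
      show "AE x in lebesgue. indicator {s..} x * (indicator {a..b} x * A x) = A2 x * indicator {s..} x"
        using A2(2) by (elim eventually_mono) simp
    qed
    also have "\<dots> = (\<integral>x. A2 x * indicator {s..} x \<partial>lborel)"
      by (intro integral_completion) measurable
    finally show ?thesis .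
  qed
  have "(LINT x:{a..b}|lebesgue. A x * (LINT s:{a..x}|lebesgue. B s))
      = (\<integral>x. (indicator {a..b} x * A x) * (\<integral>s. B2 s * indicator {..x} s \<partial>lborel) \<partial>lebesgue)"
    unfolding set_lebesgue_integral_def
  proof (intro Bochner_Integration.integral_cong refl)
    fix x show "indicator {a..b} x *\<^sub>R (A x * (\<integral>s. indicator {a..x} s *\<^sub>R B s \<partial>lebesgue)) = (indicator {a..b} x * A x) * (\<integral>s. B2 s * indicator {..x} s \<partial>lborel)"
      by (cases "x \<in> {a..b}") (use inner1[of x] in \<open>simp_all add: set_lebesgue_integral_def\<close>)
  qed
  also have "\<dots> = (\<integral>x. A2 x * (\<integral>s. B2 s * indicator {..x} s \<partial>lborel) \<partial>lebesgue)"
  proof (rule integral_cong_AE)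
    note id_leb_measurable[measurable]
    show "(\<lambda>x. (indicator {a..b} x * A x) * (\<integral>s. B2 s * indicator {..x} s \<partial>lborel)) \<in> borel_measurable lebesgue"
      by (intro borel_measurable_times Am measurable_completion) measurable
    show "(\<lambda>x. A2 x * (\<integral>s. B2 s * indicator {..x} s \<partial>lborel)) \<in> borel_measurable lebesgue"
      by (intro borel_measurable_times A2l measurable_completion) measurable
    show "AE x in lebesgue. (indicator {a..b} x * A x) * (\<integral>s. B2 s * indicator {..x} s \<partial>lborel) = A2 x * (\<integral>s. B2 s * indicator {..x} s \<partial>lborel)"
      using A2(2) by (elim eventually_mono) simp
  qed
  also have "\<dots> = (\<integral>x. A2 x * (\<integral>s. B2 s * indicator {..x} s \<partial>lborel) \<partial>lborel)"
    by (intro integral_completion) measurable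
  also have "\<dots> = (\<integral>s. B2 s * (\<integral>x. A2 x * indicator {s..} x \<partial>lborel) \<partial>lborel)"
    by (rule swap_core[OF A2(1) B2(1)])
  also have "\<dots> = (\<integral>s. B2 s * (\<integral>x. A2 x * indicator {s..} x \<partial>lborel) \<partial>lebesgue)"
    by (intro integral_completion[symmetric]) measurable
  also have "\<dots> = (\<integral>s. (indicator {a..b} s * B s) * (\<integral>x. A2 x * indicator {s..} x \<partial>lborel) \<partial>lebesgue)"
  proof (rule integral_cong_AE)
    note id_leb_measurable[measurable]
    show "(\<lambda>s. (indicator {a..b} s * B s) * (\<integral>x. A2 x * indicator {s..} x \<partial>lborel)) \<in> borel_measurable lebesgue"
      by (intro borel_measurable_times Bm measurable_completion) measurable
    show "(\<lambda>s. B2 s * (\<integral>x. A2 x * indicator {s..} x \<partial>lborel)) \<in> borel_measurable lebesgue"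
      by (intro borel_measurable_times B2l measurable_completion) measurable
    show "AE s in lebesgue. B2 s * (\<integral>x. A2 x * indicator {s..} x \<partial>lborel) = (indicator {a..b} s * B s) * (\<integral>x. A2 x * indicator {s..} x \<partial>lborel)"
      using B2(2) by (elim eventually_mono) simp
  qed
  also have "\<dots> = (LINT s:{a..b}|lebesgue. B s * (LINT x:{s..b}|lebesgue. A x))"
    unfolding set_lebesgue_integral_def
  proof (intro Bochner_Integration.integral_cong refl)
    fix s show "(indicator {a..b} s * B s) * (\<integral>x. A2 x * indicator {s..} x \<partial>lborel) = indicator {a..b} s *\<^sub>R (B s * (\<integral>x. indicator {s..b} x *\<^sub>R A x \<partial>lebesgue))"
      by (cases "s \<in> {a..b}") (use inner2[of s] in \<open>simp_all add: set_lebesgue_integral_def\<close>)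
  qed
  finally show ?thesis .
qed

lemma set_integral_split:
  fixes f :: "real \<Rightarrow> real"
  assumes "set_integrable lebesgue {a..b} f" "a \<le> c" "c \<le> b"
  shows "(LINT x:{a..b}|lebesgue. f x) = (LINT x:{a..c}|lebesgue. f x) + (LINT x:{c..b}|lebesgue. f x)"
proof -
  have i: "f integrable_on {a..b}" using set_lebesgue_integral_eq_integral(1)[OF assms(1)] .
  have "set_integrable lebesgue {a..c} f" "set_integrable lebesgue {c..b} f"
    using assms by (auto intro: set_integrable_subset)
  then show ?thesis using assms
    by (simp add: set_lebesgue_integral_eq_integral Henstock_Kurzweil_Integration.integral_combine[OF _ _ i, symmetric])
qed

lemma cont_set_integrable:
  fixes f :: "real \<Rightarrow> real"
  assumes "continuous_on {a..b} f"
  shows "set_integrable lebesgue {a..b} f"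
  using absolutely_integrable_continuous_real[OF assms] .

lemma prod_cont_set_integrable:
  fixes f h :: "real \<Rightarrow> real"
  assumes "set_integrable lebesgue {a..b} f" "continuous_on {a..b} h"
  shows "set_integrable lebesgue {a..b} (\<lambda>x. h x * f x)"
proof (rule absolutely_integrable_bounded_measurable_product_real)
  show "h \<in> borel_measurable (lebesgue_on {a..b})"
    by (rule continuous_imp_measurable_on_sets_lebesgue[OF assms(2)]) auto
  show "bounded (h ` {a..b})"
    by (intro compact_imp_bounded compact_continuous_image assms) auto
qed (use assms in auto)

lemma FTC_leb:
  fixes F F' :: "real \<Rightarrow> real"
  assumes "a \<le> b" "\<And>x. x \<in> {a..b} \<Longrightarrow> (F has_real_derivative F' x) (at x within {a..b})"
    "continuous_on {a..b} F'"
  shows "(LINT x:{a..b}|lebesgue. F' x) = F b - F a"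
proof -
  have "(F' has_integral (F b - F a)) {a..b}"
    using assms by (intro fundamental_theorem_of_calculus) (auto simp: has_real_derivative_iff_has_vector_derivative)
  then show ?thesis
    using set_lebesgue_integral_eq_integral(2)[OF cont_set_integrable[OF assms(3)]]
    by (simp add: integral_unique)
qed

lemma indef_cont:
  fixes f :: "real \<Rightarrow> real"
  assumes "set_integrable lebesgue {a..b} f"
  shows "continuous_on {a..b} (\<lambda>x. LINT s:{a..x}|lebesgue. f s)"
proof -
  have "integrable (lebesgue_on {a..b}) f"
    using assms by (simp add: integrable_restrict_space set_integrable_def)
  from indefinite_integral_continuous_real[OF this]
  show ?thesis
    by (simp add: integral_restrict_space set_lebesgue_integral_def)
qed

lemma IBP1:
  fixes G F F' :: "real \<Rightarrow> real"
  assumes G: "set_integrable lebesgue {a..b} G"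
    and F: "\<And>x. x \<in> {a..b} \<Longrightarrow> (F has_real_derivative F' x) (at x within {a..b})"
    and F'c: "continuous_on {a..b} F'"
    and t: "a \<le> t" "t \<le> b"
  shows "(LINT x:{t..b}|lebesgue. F' x * (LINT s:{a..x}|lebesgue. G s))
       = F b * (LINT s:{a..b}|lebesgue. G s) - F t * (LINT s:{a..t}|lebesgue. G s)
         - (LINT x:{t..b}|lebesgue. F x * G x)"
proof -
  have Fc: "continuous_on {a..b} F" using F by (rule DERIV_continuous_on)
  have Ft: "set_integrable lebesgue {t..b} F'"
    by (rule cont_set_integrable) (use F'c t in \<open>auto intro: continuous_on_subset\<close>)
  have Fti: "set_integrable lebesgue {a..b} (\<lambda>x. indicator {t..b} x * F' x)"
  proof -
    have "integrable lebesgue (\<lambda>x. indicator {a..b} x *\<^sub>R (indicator {t..b} x * F' x)) = integrable lebesgue (\<lambda>x. indicator {t..b} x *\<^sub>R F' x)"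
      by (rule Bochner_Integration.integrable_cong) (use t in \<open>auto simp: indicator_def\<close>)
    then show ?thesis using Ft unfolding set_integrable_def by simp
  qed
  have "(LINT x:{t..b}|lebesgue. F' x * (LINT s:{a..x}|lebesgue. G s))
      = (LINT x:{a..b}|lebesgue. (indicator {t..b} x * F' x) * (LINT s:{a..x}|lebesgue. G s))"
    unfolding set_lebesgue_integral_def[of _ "{t..b}"] set_lebesgue_integral_def[of _ "{a..b}"]
    using t by (intro Bochner_Integration.integral_cong) (auto simp: indicator_def)
  also have "\<dots> = (LINT s:{a..b}|lebesgue. G s * (LINT x:{s..b}|lebesgue. indicator {t..b} x * F' x))"
    by (rule swap_interval[OF Fti G])
  also have "\<dots> = (LINT s:{a..b}|lebesgue. G s * (F b - F (max s t)))"
  proof (rule set_lebesgue_integral_cong)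
    show "\<forall>s. s \<in> {a..b} \<longrightarrow> G s * (LINT x:{s..b}|lebesgue. indicator {t..b} x * F' x) = G s * (F b - F (max s t))"
    proof safe
      fix s assume s: "s \<in> {a..b}"
      have "(LINT x:{s..b}|lebesgue. indicator {t..b} x * F' x) = (LINT x:{max s t..b}|lebesgue. F' x)"
        unfolding set_lebesgue_integral_def
        by (intro Bochner_Integration.integral_cong) (auto simp: indicator_def)
      also have "\<dots> = F b - F (max s t)"
        using s t by (intro FTC_leb) (auto intro: continuous_on_subset[OF F'c] DERIV_subset[OF F])
      finally show "G s * (LINT x:{s..b}|lebesgue. indicator {t..b} x * F' x) = G s * (F b - F (max s t))"
        by simp
    qed
  qed auto
  also have "\<dots> = F b * (LINT s:{a..b}|lebesgue. G s) - (LINT s:{a..b}|lebesgue. F (max s t) * G s)"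
  proof -
    have c: "continuous_on {a..b} (\<lambda>s. F (max s t))"
      by (rule continuous_on_compose2[OF Fc]) (use t in \<open>auto intro!: continuous_intros\<close>)
    have i1: "set_integrable lebesgue {a..b} (\<lambda>s. F b * G s)" using G by auto
    have i2: "set_integrable lebesgue {a..b} (\<lambda>s. F (max s t) * G s)"
      by (rule prod_cont_set_integrable[OF G c])
    have "(LINT s:{a..b}|lebesgue. G s * (F b - F (max s t))) = (LINT s:{a..b}|lebesgue. F b * G s - F (max s t) * G s)"
      by (simp add: algebra_simps)
    also have "\<dots> = (LINT s:{a..b}|lebesgue. F b * G s) - (LINT s:{a..b}|lebesgue. F (max s t) * G s)"
      by (rule set_integral_diff(2)[OF i1 i2])
    finally show ?thesis by simp
  qed
  also have "(LINT s:{a..b}|lebesgue. F (max s t) * G s) = F t * (LINT s:{a..t}|lebesgue. G s) + (LINT x:{t..b}|lebesgue. F x * G x)"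
  proof -
    have c: "continuous_on {a..b} (\<lambda>s. F (max s t))"
      by (rule continuous_on_compose2[OF Fc]) (use t in \<open>auto intro!: continuous_intros\<close>)
    have i2: "set_integrable lebesgue {a..b} (\<lambda>s. F (max s t) * G s)"
      by (rule prod_cont_set_integrable[OF G c])
    have "(LINT s:{a..b}|lebesgue. F (max s t) * G s) = (LINT s:{a..t}|lebesgue. F (max s t) * G s) + (LINT s:{t..b}|lebesgue. F (max s t) * G s)"
      by (rule set_integral_split[OF i2 t])
    also have "(LINT s:{a..t}|lebesgue. F (max s t) * G s) = (LINT s:{a..t}|lebesgue. F t * G s)"
      by (rule set_lebesgue_integral_cong) auto
    also have "(LINT s:{t..b}|lebesgue. F (max s t) * G s) = (LINT s:{t..b}|lebesgue. F s * G s)"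
      by (rule set_lebesgue_integral_cong) auto
    finally show ?thesis by simp
  qed
  finally show ?thesis by simp
qed

lemma quad_identity:
  fixes G Z Z' :: "real \<Rightarrow> real"
  assumes G: "set_integrable lebesgue {a..b} G"
    and Z: "\<And>x. x \<in> {a..b} \<Longrightarrow> (Z has_real_derivative Z' x) (at x within {a..b})"
    and Z'c: "continuous_on {a..b} Z'"
    and Ub: "(LINT s:{a..b}|lebesgue. G s) = 0"
    and ab: "a \<le> b"
  shows "(LINT x:{a..b}|lebesgue. Z' x * (LINT s:{a..x}|lebesgue. G s)^2)
       = -2 * (LINT x:{a..b}|lebesgue. Z x * (LINT s:{a..x}|lebesgue. G s) * G x)"
proof -
  define U where "U x = (LINT s:{a..x}|lebesgue. G s)" for x
  have Uc: "continuous_on {a..b} U" unfolding U_def by (rule indef_cont[OF G])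
  have Zc: "continuous_on {a..b} Z" using Z by (rule DERIV_continuous_on)
  have ZGi: "set_integrable lebesgue {a..b} (\<lambda>x. Z x * G x)"
    by (rule prod_cont_set_integrable[OF G Zc])
  have Vc: "continuous_on {a..b} (\<lambda>s. LINT x:{a..s}|lebesgue. Z x * G x)"
    by (rule indef_cont[OF ZGi])
  have ZUGi: "set_integrable lebesgue {a..b} (\<lambda>x. (Z x * U x) * G x)"
    by (rule prod_cont_set_integrable[OF G]) (intro continuous_on_mult Zc Uc)
  have "(LINT x:{a..b}|lebesgue. Z' x * (U x)^2) = (LINT x:{a..b}|lebesgue. (Z' x * U x) * (LINT s:{a..x}|lebesgue. G s))"
    unfolding U_def power2_eq_square by (simp add: mult.assoc)
  also have "\<dots> = (LINT s:{a..b}|lebesgue. G s * (LINT x:{s..b}|lebesgue. Z' x * U x))"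
    by (rule swap_interval[OF cont_set_integrable G]) (intro continuous_on_mult Z'c Uc)
  also have "\<dots> = (LINT s:{a..b}|lebesgue. G s * (- Z s * U s - (LINT x:{s..b}|lebesgue. Z x * G x)))"
  proof (rule set_lebesgue_integral_cong)
    show "\<forall>s. s \<in> {a..b} \<longrightarrow> G s * (LINT x:{s..b}|lebesgue. Z' x * U x) = G s * (- Z s * U s - (LINT x:{s..b}|lebesgue. Z x * G x))"
    proof safe
      fix s assume s: "s \<in> {a..b}"
      have "(LINT x:{s..b}|lebesgue. Z' x * U x) = Z b * U b - Z s * U s - (LINT x:{s..b}|lebesgue. Z x * G x)"
        unfolding U_def by (rule IBP1[OF G Z Z'c]) (use s in auto)
      then show "G s * (LINT x:{s..b}|lebesgue. Z' x * U x) = G s * (- Z s * U s - (LINT x:{s..b}|lebesgue. Z x * G x))"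
        using Ub by (simp add: U_def)
    qed
  qed auto
  also have "\<dots> = (LINT s:{a..b}|lebesgue. - ((Z s * U s) * G s) - G s * ((LINT x:{a..b}|lebesgue. Z x * G x) - (LINT x:{a..s}|lebesgue. Z x * G x)))"
  proof (rule set_lebesgue_integral_cong)
    show "\<forall>s. s \<in> {a..b} \<longrightarrow> G s * (- Z s * U s - (LINT x:{s..b}|lebesgue. Z x * G x)) = - ((Z s * U s) * G s) - G s * ((LINT x:{a..b}|lebesgue. Z x * G x) - (LINT x:{a..s}|lebesgue. Z x * G x))"
      using set_integral_split[OF ZGi] by (auto simp: algebra_simps)
  qed auto
  also have "\<dots> = - (LINT s:{a..b}|lebesgue. (Z s * U s) * G s) - (LINT s:{a..b}|lebesgue. G s * ((LINT x:{a..b}|lebesgue. Z x * G x) - (LINT x:{a..s}|lebesgue. Z x * G x)))"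
  proof -
    have i2: "set_integrable lebesgue {a..b} (\<lambda>s. G s * ((LINT x:{a..b}|lebesgue. Z x * G x) - (LINT x:{a..s}|lebesgue. Z x * G x)))"
    proof -
      have cc: "continuous_on {a..b} (\<lambda>s. (LINT x:{a..b}|lebesgue. Z x * G x) - (LINT x:{a..s}|lebesgue. Z x * G x))"
        by (intro continuous_on_diff continuous_on_const Vc)
      show ?thesis using prod_cont_set_integrable[OF G cc] by (simp only: mult.commute)
    qed
    have "set_integrable lebesgue {a..b} (\<lambda>s. (-1) * ((Z s * U s) * G s))" using ZUGi by (intro set_integrable_mult_right)
    then have i1: "set_integrable lebesgue {a..b} (\<lambda>s. - ((Z s * U s) * G s))" by simp
    show ?thesis
      using set_integral_diff(2)[OF i1 i2] set_integral_uminus[OF ZUGi] by simp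
  qed
  also have "(LINT s:{a..b}|lebesgue. G s * ((LINT x:{a..b}|lebesgue. Z x * G x) - (LINT x:{a..s}|lebesgue. Z x * G x)))
      = (LINT s:{a..b}|lebesgue. G s * (LINT x:{s..b}|lebesgue. Z x * G x))"
  proof (rule set_lebesgue_integral_cong)
    show "\<forall>s. s \<in> {a..b} \<longrightarrow> G s * ((LINT x:{a..b}|lebesgue. Z x * G x) - (LINT x:{a..s}|lebesgue. Z x * G x)) = G s * (LINT x:{s..b}|lebesgue. Z x * G x)"
      using set_integral_split[OF ZGi] by auto
  qed auto
  also have "\<dots> = (LINT x:{a..b}|lebesgue. (Z x * G x) * (LINT s:{a..x}|lebesgue. G s))"
    by (rule swap_interval[OF ZGi G, symmetric])
  also have "\<dots> = (LINT x:{a..b}|lebesgue. (Z x * U x) * G x)"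
    unfolding U_def by (simp add: mult_ac)
  finally show ?thesis unfolding U_def by (simp add: mult_ac)
qed

lemma Ioo_Icc_integrable:
  fixes f :: "real \<Rightarrow> real"
  shows "set_integrable lebesgue {a<..<b} f \<longleftrightarrow> set_integrable lebesgue {a..b} f"
  by (rule set_integrable_discrete_difference[where X="{a,b}"]) auto

lemma Ioo_Icc_integral:
  fixes f :: "real \<Rightarrow> real"
  shows "(LINT x:{a<..<b}|lebesgue. f x) = (LINT x:{a..b}|lebesgue. f x)"
  by (rule set_integral_discrete_difference[where X="{a,b}"]) auto

lemma set_integral_const_Icc:
  fixes k :: real
  assumes "c \<le> d"
  shows "(LINT x:{c..d}|lebesgue. k) = (d - c) * k"
  using assms by (subst set_integral_const) auto

lemma set_integral_nonneg':
  fixes f :: "'a \<Rightarrow> real"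
  assumes "\<And>x. x \<in> A \<Longrightarrow> 0 \<le> f x"
  shows "0 \<le> (LINT x:A|M. f x)"
  unfolding set_lebesgue_integral_def
  by (rule integral_nonneg_AE) (use assms in \<open>auto simp: indicator_def\<close>)

lemma set_integrable_const_Icc:
  fixes c d :: real shows "set_integrable lebesgue {c..d} (\<lambda>x. k::real)"
  using cont_set_integrable[of c d "\<lambda>x. k"] by simp

lemma bounded_mult_set_integrable:
  fixes f h :: "real \<Rightarrow> real"
  assumes h: "set_integrable lebesgue {a..b} h" and f: "f \<in> borel_measurable lebesgue"
    and hm: "(\<lambda>x. indicator {a..b} x * h x) \<in> borel_measurable lebesgue"
    and bd: "AE x in lebesgue. \<bar>f x\<bar> \<le> C"
  shows "set_integrable lebesgue {a..b} (\<lambda>x. f x * h x)"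
  unfolding set_integrable_def
proof (rule Bochner_Integration.integrable_bound)
  show "integrable lebesgue (\<lambda>x. C * (indicator {a..b} x *\<^sub>R h x))"
    using h unfolding set_integrable_def by auto
  show "(\<lambda>x. indicator {a..b} x *\<^sub>R (f x * h x)) \<in> borel_measurable lebesgue"
  proof -
    have "(\<lambda>x. f x * (indicator {a..b} x * h x)) \<in> borel_measurable lebesgue"
      by (rule borel_measurable_times[OF f hm])
    then show ?thesis by (simp add: mult_ac)
  qed
  show "AE x in lebesgue. norm (indicator {a..b} x *\<^sub>R (f x * h x)) \<le> norm (C * (indicator {a..b} x *\<^sub>R h x))"
    using bd
  proof eventually_elim
    case (elim x)
    then have "\<bar>f x\<bar> * \<bar>h x\<bar> \<le> C * \<bar>h x\<bar>" by (intro mult_right_mono) auto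
    moreover have "0 \<le> C" using elim by linarith
    ultimately show ?case by (auto simp: indicator_def abs_mult)
  qed
qed

lemma cont_measurable_leb:
  fixes f :: "real \<Rightarrow> real"
  assumes "continuous_on {a..b} f"
  shows "(\<lambda>x. indicator {a..b} x * f x) \<in> borel_measurable lebesgue"
  using cont_set_integrable[OF assms] unfolding set_integrable_def by auto

lemma CS_ineq:
  fixes G :: "real \<Rightarrow> real"
  assumes cd: "c \<le> d" and G: "set_integrable lebesgue {c..d} G"
    and G2: "set_integrable lebesgue {c..d} (\<lambda>x. (G x)^2)"
  shows "(LINT x:{c..d}|lebesgue. G x)^2 \<le> (d - c) * (LINT x:{c..d}|lebesgue. (G x)^2)"
proof (cases "c = d")
  case True
  have "(LINT x:{c..d}|lebesgue. G x) = 0"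
    using True by (subst set_integral_discrete_difference[where X="{c}" and B="{}"]) (auto simp: set_lebesgue_integral_def)
  then show ?thesis using True by simp
next
  case False
  then have mu: "d - c > 0" using cd by simp
  define m where "m = (LINT x:{c..d}|lebesgue. G x)"
  define k where "k = m / (d - c)"
  have "0 \<le> (LINT x:{c..d}|lebesgue. (G x - k)^2)"
    by (intro set_integral_nonneg') auto
  also have "(LINT x:{c..d}|lebesgue. (G x - k)^2) = (LINT x:{c..d}|lebesgue. (G x)^2 + ((-2*k) * G x + k^2))"
    by (simp add: power2_eq_square algebra_simps)
  also have "\<dots> = (LINT x:{c..d}|lebesgue. (G x)^2) + ((-2*k) * m + (d - c) * k^2)"
  proof -
    have Gk: "set_integrable lebesgue {c..d} (\<lambda>x. (-2*k) * G x)"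
      using G by (rule set_integrable_mult_right)
    have i: "set_integrable lebesgue {c..d} (\<lambda>x. (-2*k) * G x + k^2)"
      by (rule set_integral_add(1)[OF Gk set_integrable_const_Icc])
    have "(LINT x:{c..d}|lebesgue. (G x)^2 + ((-2*k) * G x + k^2)) = (LINT x:{c..d}|lebesgue. (G x)^2) + (LINT x:{c..d}|lebesgue. (-2*k) * G x + k^2)"
      by (rule set_integral_add(2)[OF G2 i])
    also have "(LINT x:{c..d}|lebesgue. (-2*k) * G x + k^2) = (LINT x:{c..d}|lebesgue. (-2*k) * G x) + (LINT x:{c..d}|lebesgue. k^2)"
      by (rule set_integral_add(2)[OF Gk set_integrable_const_Icc])
    also have "(LINT x:{c..d}|lebesgue. (-2*k) * G x) = (-2*k) * m"
      unfolding m_def by (rule set_integral_mult_right)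
    also have "(LINT x:{c..d}|lebesgue. k^2) = (d - c) * k^2"
      using cd by (rule set_integral_const_Icc)
    finally show ?thesis .
  qed
  also have "(-2*k) * m + (d - c) * k^2 = -(m^2) / (d - c)"
  proof -
    have "(d - c) * k^2 = m * k" using mu by (simp add: k_def power2_eq_square)
    then show ?thesis using mu by (simp add: k_def field_simps power2_eq_square)
  qed
  finally have "m^2 / (d - c) \<le> (LINT x:{c..d}|lebesgue. (G x)^2)" by simp
  then show ?thesis using mu unfolding m_def by (simp add: field_simps)
qed

lemma H10_facts:
  assumes "(u, g) \<in> H10 a b" "a < b"
  shows "set_integrable lebesgue {a..b} g" "set_integrable lebesgue {a..b} (\<lambda>x. (g x)^2)"
    "g \<in> borel_measurable lebesgue"
    "\<And>x. x \<in> {a..b} \<Longrightarrow> u x = (LINT t:{a..x}|lebesgue. g t)"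
    "(LINT t:{a..b}|lebesgue. g t) = 0"
    "continuous_on {a..b} u"
    "\<And>x. x \<in> {a..b} \<Longrightarrow> (u x)^2 \<le> (b - a) * (LINT t:{a..b}|lebesgue. (g t)^2)"
proof -
  have h: "g \<in> borel_measurable lebesgue" "set_integrable lebesgue {a<..<b} g"
       "set_integrable lebesgue {a<..<b} (\<lambda>x. (g x)\<^sup>2)"
       "\<forall>x\<in>{a..b}. u x = (LINT t:{a..x}|lebesgue. g t)" "u b = 0"
    using assms(1) unfolding H10_def by auto
  show gi: "set_integrable lebesgue {a..b} g" using h(2) Ioo_Icc_integrable by blast
  show g2i: "set_integrable lebesgue {a..b} (\<lambda>x. (g x)^2)" using h(3) Ioo_Icc_integrable by blast
  show "g \<in> borel_measurable lebesgue" by fact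
  show ux: "\<And>x. x \<in> {a..b} \<Longrightarrow> u x = (LINT t:{a..x}|lebesgue. g t)" using h(4) by auto
  show "(LINT t:{a..b}|lebesgue. g t) = 0" using ux[of b] h(5) assms(2) by auto
  show "continuous_on {a..b} u"
    using indef_cont[OF gi] by (rule continuous_on_eq) (use ux in auto)
  fix x assume x: "x \<in> {a..b}"
  have gix: "set_integrable lebesgue {a..x} g" using gi x by (auto intro: set_integrable_subset)
  have g2ix: "set_integrable lebesgue {a..x} (\<lambda>x. (g x)^2)" using g2i x by (auto intro: set_integrable_subset)
  have "(u x)^2 \<le> (x - a) * (LINT t:{a..x}|lebesgue. (g t)^2)"
    using CS_ineq[OF _ gix g2ix] x ux[OF x] by auto
  also have "\<dots> \<le> (b - a) * (LINT t:{a..b}|lebesgue. (g t)^2)"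
  proof (rule mult_mono)
    have "(LINT t:{a..b}|lebesgue. (g t)^2) = (LINT t:{a..x}|lebesgue. (g t)^2) + (LINT t:{x..b}|lebesgue. (g t)^2)"
      using x by (intro set_integral_split[OF g2i]) auto
    moreover have "0 \<le> (LINT t:{x..b}|lebesgue. (g t)^2)" by (rule set_integral_nonneg') auto
    ultimately show "(LINT t:{a..x}|lebesgue. (g t)^2) \<le> (LINT t:{a..b}|lebesgue. (g t)^2)" by simp
    show "0 \<le> (LINT t:{a..x}|lebesgue. (g t)^2)" by (rule set_integral_nonneg') auto
  qed (use x in auto)
  finally show "(u x)^2 \<le> (b - a) * (LINT t:{a..b}|lebesgue. (g t)^2)" .
qed

lemma riccati:
  fixes p Z Z' u g :: "real \<Rightarrow> real"
  assumes ab: "a < b" and ug: "(u, g) \<in> H10 a b"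
    and pm: "p \<in> borel_measurable lebesgue" and pb: "AE x in lebesgue. 1 / \<beta> \<le> p x \<and> p x \<le> \<beta>"
    and beta: "0 < \<beta>"
    and Z: "\<And>x. x \<in> {a..b} \<Longrightarrow> (Z has_real_derivative Z' x) (at x within {a..b})"
    and Z'c: "continuous_on {a..b} Z'"
  shows "- (LINT x:{a..b}|lebesgue. Z' x * (u x)^2 + (1 / p x) * ((Z x)^2 * (u x)^2))
         \<le> (LINT x:{a..b}|lebesgue. p x * (g x)^2)"
proof -
  note hf = H10_facts[OF ug ab]
  have Zc: "continuous_on {a..b} Z" using Z by (rule DERIV_continuous_on)
  have uc: "continuous_on {a..b} u" by (rule hf(6))
  have g2m: "(\<lambda>x. indicator {a..b} x * (g x)^2) \<in> borel_measurable lebesgue"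
    using hf(2) unfolding set_integrable_def by simp
  have Pi: "set_integrable lebesgue {a..b} (\<lambda>x. p x * (g x)^2)"
  proof (rule bounded_mult_set_integrable[OF hf(2) pm g2m, where C=\<beta>])
    show "AE x in lebesgue. \<bar>p x\<bar> \<le> \<beta>"
      using pb
    proof eventually_elim
      case (elim x)
      then have "0 < p x" using beta by (smt (verit) divide_pos_pos)
      then show ?case using elim by auto
    qed
  qed
  have ZUG: "set_integrable lebesgue {a..b} (\<lambda>x. (Z x * u x) * g x)"
    by (rule prod_cont_set_integrable[OF hf(1)]) (intro continuous_on_mult Zc uc)
  have T1: "set_integrable lebesgue {a..b} (\<lambda>x. Z' x * (u x)^2)"
    by (intro cont_set_integrable continuous_on_mult continuous_on_power Z'c uc)
  have pinvm: "(\<lambda>x. 1 / p x) \<in> borel_measurable lebesgue" using pm by measurable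
  have c2: "continuous_on {a..b} (\<lambda>x. (Z x)^2 * (u x)^2)"
    by (intro continuous_on_mult continuous_on_power Zc uc)
  have T2: "set_integrable lebesgue {a..b} (\<lambda>x. (1 / p x) * ((Z x)^2 * (u x)^2))"
  proof (rule bounded_mult_set_integrable[OF cont_set_integrable[OF c2] pinvm cont_measurable_leb[OF c2], where C=\<beta>])
    show "AE x in lebesgue. \<bar>1 / p x\<bar> \<le> \<beta>"
      using pb
    proof eventually_elim
      case (elim x)
      then have "0 < p x" using beta by (smt (verit) divide_pos_pos)
      then show ?case using elim beta by (auto simp: field_simps)
    qed
  qed
  have ident: "(LINT x:{a..b}|lebesgue. Z' x * (u x)^2) = -2 * (LINT x:{a..b}|lebesgue. (Z x * u x) * g x)"
  proof -
    have "(LINT x:{a..b}|lebesgue. Z' x * (u x)^2) = (LINT x:{a..b}|lebesgue. Z' x * (LINT s:{a..x}|lebesgue. g s)^2)"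
      by (rule set_lebesgue_integral_cong) (auto simp: hf(4))
    also have "\<dots> = -2 * (LINT x:{a..b}|lebesgue. Z x * (LINT s:{a..x}|lebesgue. g s) * g x)"
      by (rule quad_identity[OF hf(1) Z Z'c hf(5)]) (use ab in auto)
    also have "(LINT x:{a..b}|lebesgue. Z x * (LINT s:{a..x}|lebesgue. g s) * g x) = (LINT x:{a..b}|lebesgue. (Z x * u x) * g x)"
      by (rule set_lebesgue_integral_cong) (auto simp: hf(4))
    finally show ?thesis .
  qed
  have "(LINT x:{a..b}|lebesgue. 2 * ((Z x * u x) * g x) - (1 / p x) * ((Z x)^2 * (u x)^2)) \<le> (LINT x:{a..b}|lebesgue. p x * (g x)^2)"
  proof (rule set_integral_mono_AE)
    show "set_integrable lebesgue {a..b} (\<lambda>x. 2 * ((Z x * u x) * g x) - (1 / p x) * ((Z x)^2 * (u x)^2))"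
      using ZUG T2 by (intro set_integral_diff(1) set_integrable_mult_right)
    show "AE x\<in>{a..b} in lebesgue. 2 * ((Z x * u x) * g x) - (1 / p x) * ((Z x)^2 * (u x)^2) \<le> p x * (g x)^2"
      using pb
    proof eventually_elim
      case (elim x)
      then have px: "0 < p x" using beta by (smt (verit) divide_pos_pos)
      have "0 \<le> (p x * g x - Z x * u x)^2 / p x" using px by simp
      also have "(p x * g x - Z x * u x)^2 / p x = p x * (g x)^2 - (2 * ((Z x * u x) * g x) - (1 / p x) * ((Z x)^2 * (u x)^2))"
        using px by (simp add: field_simps power2_eq_square)
      finally show ?case by simp
    qed
  qed (rule Pi)
  also have "(LINT x:{a..b}|lebesgue. 2 * ((Z x * u x) * g x) - (1 / p x) * ((Z x)^2 * (u x)^2))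
      = 2 * (LINT x:{a..b}|lebesgue. (Z x * u x) * g x) - (LINT x:{a..b}|lebesgue. (1 / p x) * ((Z x)^2 * (u x)^2))"
    using ZUG T2 by (subst set_integral_diff(2)) (auto intro: set_integrable_mult_right)
  also have "(LINT x:{a..b}|lebesgue. Z' x * (u x)^2 + (1 / p x) * ((Z x)^2 * (u x)^2))
      = (LINT x:{a..b}|lebesgue. Z' x * (u x)^2) + (LINT x:{a..b}|lebesgue. (1 / p x) * ((Z x)^2 * (u x)^2))"
    by (rule set_integral_add(2)[OF T1 T2])
  ultimately show ?thesis using ident by simp
qed

lemma sin_lower:
  fixes c y :: real
  assumes "0 < c" "c \<le> y" "y \<le> pi - c"
  shows "sin c \<le> sin y"
proof (cases "y \<le> pi/2")
  case True
  then show ?thesis using assms by (intro sin_monotone_2pi_le) auto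
next
  case False
  have "sin c \<le> sin (pi - y)" using assms False by (intro sin_monotone_2pi_le) auto
  then show ?thesis by simp
qed

lemma cot_deriv:
  fixes k p0 a0 :: real
  assumes "sin (k * (x - a0)) \<noteq> 0"
  shows "((\<lambda>x. p0 * k * (cos (k * (x - a0)) / sin (k * (x - a0)))) has_real_derivative
          - p0 * k^2 / (sin (k * (x - a0)))^2) (at x within S)"
proof -
  have "((\<lambda>x. p0 * k * (cos (k * (x - a0)) / sin (k * (x - a0)))) has_real_derivative
          p0 * k * ((- sin (k * (x - a0)) * (k * 1) * sin (k * (x - a0)) - cos (k * (x - a0)) * (cos (k * (x - a0)) * (k * 1))) / (sin (k * (x - a0)))^2)) (at x within S)"
    using assms by (auto intro!: derivative_eq_intros simp: power2_eq_square algebra_simps)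
  moreover have "p0 * k * ((- sin (k * (x - a0)) * (k * 1) * sin (k * (x - a0)) - cos (k * (x - a0)) * (cos (k * (x - a0)) * (k * 1))) / (sin (k * (x - a0)))^2)
      = - p0 * k^2 / (sin (k * (x - a0)))^2"
  proof -
    define sn where "sn = sin (k * (x - a0))"
    define cs where "cs = cos (k * (x - a0))"
    have e: "sn^2 + cs^2 = 1" unfolding sn_def cs_def by simp
    have "- sn * (k * 1) * sn - cs * (cs * (k * 1)) = - k * (sn^2 + cs^2)"
      by (simp add: power2_eq_square algebra_simps)
    then have "- sn * (k * 1) * sn - cs * (cs * (k * 1)) = - k" using e by simp
    then show ?thesis unfolding sn_def[symmetric] cs_def[symmetric] by (simp add: power2_eq_square)
  qed
  ultimately show ?thesis by simp
qed

lemma absdiff_integrable: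
  fixes p :: "real \<Rightarrow> real"
  assumes pm: "p \<in> borel_measurable lebesgue" and pb: "AE x in lebesgue. \<bar>p x\<bar> \<le> C"
  shows "set_integrable lebesgue {a..b} (\<lambda>x. \<bar>p x - p0\<bar>)"
proof -
  have "set_integrable lebesgue {a..b} (\<lambda>x. \<bar>p x - p0\<bar> * 1)"
  proof (rule bounded_mult_set_integrable[where C="C + \<bar>p0\<bar>"])
    show "set_integrable lebesgue {a..b} (\<lambda>x. 1::real)" by (rule set_integrable_const_Icc)
    show "(\<lambda>x. \<bar>p x - p0\<bar>) \<in> borel_measurable lebesgue" using pm by measurable
    show "(\<lambda>x. indicator {a..b} x * (1::real)) \<in> borel_measurable lebesgue"
      using cont_measurable_leb[of a b "\<lambda>x. 1"] by simp
    show "AE x in lebesgue. \<bar>\<bar>p x - p0\<bar>\<bar> \<le> C + \<bar>p0\<bar>" using pb by (auto elim!: eventually_mono)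
  qed
  then show ?thesis by simp
qed

lemma recip_bound:
  fixes px \<beta> p0 :: real
  assumes "1 / \<beta> \<le> px" "0 < \<beta>"
  shows "0 < px" "\<bar>1 - p0 / px\<bar> \<le> \<beta> * \<bar>px - p0\<bar>"
proof -
  have "0 < 1 / \<beta>" using assms by simp
  then show px: "0 < px" using assms by linarith
  have "\<bar>1 - p0 / px\<bar> = \<bar>px - p0\<bar> / px" using px by (simp add: field_simps abs_div)
  also have "\<dots> \<le> \<bar>px - p0\<bar> * \<beta>"
  proof -
    have "1 / px \<le> \<beta>" using assms px by (simp add: field_simps)
    then have "\<bar>px - p0\<bar> * (1 / px) \<le> \<bar>px - p0\<bar> * \<beta>" by (intro mult_left_mono) auto
    then show ?thesis by simp
  qed
  finally show "\<bar>1 - p0 / px\<bar> \<le> \<beta> * \<bar>px - p0\<bar>" by (simp add: mult.commute)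
qed

lemma lower_core:
  fixes p u g :: "real \<Rightarrow> real"
  assumes ab: "a < b" and ug: "(u, g) \<in> H10 a b"
    and pm: "p \<in> borel_measurable lebesgue" and pb: "AE x in lebesgue. 1 / \<beta> \<le> p x \<and> p x \<le> \<beta>"
    and beta: "0 < \<beta>" and p0: "0 < p0" and th: "0 < \<theta>"
  shows "p0 * (pi / ((b-a)*(1+2*\<theta>)))^2 * (LINT x:{a..b}|lebesgue. (u x)^2)
         - p0 * (pi / ((b-a)*(1+2*\<theta>)))^2 * (1 / (sin (pi*\<theta>/(1+2*\<theta>)))^2) * \<beta> * (b-a)
            * (LINT x:{a..b}|lebesgue. (g x)^2) * (LINT x:{a..b}|lebesgue. \<bar>p x - p0\<bar>)
         \<le> (LINT x:{a..b}|lebesgue. p x * (g x)^2)"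
proof -
  define L where "L = b - a"
  define k where "k = pi / ((b-a)*(1+2*\<theta>))"
  define c0 where "c0 = pi*\<theta>/(1+2*\<theta>)"
  define M where "M = 1 / (sin c0)^2"
  define a0 where "a0 = a - \<theta> * L"
  define Gs where "Gs = (LINT x:{a..b}|lebesgue. (g x)^2)"
  note hf = H10_facts[OF ug ab]
  have L: "0 < L" using ab by (simp add: L_def)
  have k: "0 < k" using ab th by (simp add: k_def)
  have c0: "0 < c0" "c0 < pi/2" using th by (auto simp: c0_def field_simps)
  have sc0: "0 < sin c0" using c0 by (intro sin_gt_zero) auto
  have phi: "c0 \<le> k * (x - a0) \<and> k * (x - a0) \<le> pi - c0" if "x \<in> {a..b}" for x
  proof -
    have "k * (a - a0) = pi / (L*(1+2*\<theta>)) * (\<theta>*L)" unfolding k_def a0_def L_def by simp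
    also have "\<dots> = c0"
    proof -
      have "L \<noteq> 0" "1 + 2*\<theta> \<noteq> 0" using L th by auto
      then show ?thesis unfolding c0_def by (simp add: divide_simps)
    qed
    finally have e1: "k * (a - a0) = c0" .
    have "k * (b - a0) = pi / (L*(1+2*\<theta>)) * ((1+\<theta>)*L)" unfolding k_def a0_def L_def by (simp add: algebra_simps)
    also have "\<dots> = pi - c0"
    proof -
      have "L \<noteq> 0" "1 + 2*\<theta> \<noteq> 0" using L th by auto
      then show ?thesis unfolding c0_def by (simp add: divide_simps) (simp add: algebra_simps)
    qed
    finally have e2: "k * (b - a0) = pi - c0" .
    have "k * (a - a0) \<le> k * (x - a0)" "k * (x - a0) \<le> k * (b - a0)" using that k by (auto intro!: mult_left_mono)
    then show ?thesis using e1 e2 by simp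
  qed
  have sphi: "sin c0 \<le> sin (k * (x - a0))" if "x \<in> {a..b}" for x
    using phi[OF that] c0 by (intro sin_lower) auto
  define Z where "Z x = p0 * k * (cos (k * (x - a0)) / sin (k * (x - a0)))" for x
  define Z' where "Z' x = - p0 * k^2 / (sin (k * (x - a0)))^2" for x
  have Zd: "(Z has_real_derivative Z' x) (at x within {a..b})" if "x \<in> {a..b}" for x
    unfolding Z_def Z'_def using sphi[OF that] sc0 by (intro cot_deriv) auto
  have Z'c: "continuous_on {a..b} Z'"
    unfolding Z'_def using sphi sc0 by (intro continuous_intros) (auto dest!: sphi)
  have Zc: "continuous_on {a..b} Z" using Zd by (rule DERIV_continuous_on)
  have ric: "- (LINT x:{a..b}|lebesgue. Z' x * (u x)^2 + (1 / p x) * ((Z x)^2 * (u x)^2))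
         \<le> (LINT x:{a..b}|lebesgue. p x * (g x)^2)"
    by (rule riccati[OF ab ug pm pb beta Zd Z'c])
  have uc: "continuous_on {a..b} u" by (rule hf(6))
  have T1: "set_integrable lebesgue {a..b} (\<lambda>x. Z' x * (u x)^2)"
    by (intro cont_set_integrable continuous_on_mult continuous_on_power Z'c uc)
  have pinvm: "(\<lambda>x. 1 / p x) \<in> borel_measurable lebesgue" using pm by measurable
  have c2: "continuous_on {a..b} (\<lambda>x. (Z x)^2 * (u x)^2)"
    by (intro continuous_on_mult continuous_on_power Zc uc)
  have T2: "set_integrable lebesgue {a..b} (\<lambda>x. (1 / p x) * ((Z x)^2 * (u x)^2))"
  proof (rule bounded_mult_set_integrable[OF cont_set_integrable[OF c2] pinvm cont_measurable_leb[OF c2], where C=\<beta>])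
    show "AE x in lebesgue. \<bar>1 / p x\<bar> \<le> \<beta>"
      using pb
    proof eventually_elim
      case (elim x)
      then have "0 < p x" using beta by (smt (verit) divide_pos_pos)
      then show ?case using elim beta by (auto simp: field_simps)
    qed
  qed
  have pbd: "AE x in lebesgue. \<bar>p x\<bar> \<le> \<beta>"
    using pb by eventually_elim (use beta in \<open>smt (verit) divide_pos_pos\<close>)
  have A: "set_integrable lebesgue {a..b} (\<lambda>x. \<bar>p x - p0\<bar>)"
    by (rule absdiff_integrable[OF pm pbd])
  have S: "set_integrable lebesgue {a..b} (\<lambda>x. (u x)^2)"
    by (intro cont_set_integrable continuous_on_power uc)
  define C where "C = p0 * k^2 * M * \<beta> * L * Gs"
  have "(LINT x:{a..b}|lebesgue. Z' x * (u x)^2 + (1 / p x) * ((Z x)^2 * (u x)^2))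
      \<le> (LINT x:{a..b}|lebesgue. (- (p0 * k^2)) * (u x)^2 + C * \<bar>p x - p0\<bar>)"
  proof (rule set_integral_mono_AE)
    show "set_integrable lebesgue {a..b} (\<lambda>x. Z' x * (u x)^2 + (1 / p x) * ((Z x)^2 * (u x)^2))"
      by (rule set_integral_add(1)[OF T1 T2])
    show "set_integrable lebesgue {a..b} (\<lambda>x. (- (p0 * k^2)) * (u x)^2 + C * \<bar>p x - p0\<bar>)"
      using S A by (intro set_integral_add(1) set_integrable_mult_right)
    show "AE x\<in>{a..b} in lebesgue. Z' x * (u x)^2 + (1 / p x) * ((Z x)^2 * (u x)^2) \<le> (- (p0 * k^2)) * (u x)^2 + C * \<bar>p x - p0\<bar>"
      using pb
    proof eventually_elim
      case (elim x)
      show ?case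
      proof
        assume x: "x \<in> {a..b}"
        have px: "0 < p x" by (rule recip_bound(1)) (use elim beta in auto)
        have r: "\<bar>1 - p0 / p x\<bar> \<le> \<beta> * \<bar>p x - p0\<bar>" by (rule recip_bound(2)) (use elim beta in auto)
        define sn where "sn = sin (k * (x - a0))"
        define cs where "cs = cos (k * (x - a0))"
        have sn: "sin c0 \<le> sn" using sphi[OF x] by (simp add: sn_def)
        have snp: "0 < sn" using sn sc0 by simp
        have e: "sn^2 + cs^2 = 1" unfolding sn_def cs_def by simp
        define E where "E = cs^2 / sn^2"
        have E0: "0 \<le> E" by (simp add: E_def)
        have EM: "E \<le> M"
        proof -
          have "cs^2 \<le> 1" using e by (smt (verit) zero_le_power2)
          then have "E \<le> 1 / sn^2" unfolding E_def using snp by (intro divide_right_mono) auto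
          also have "\<dots> \<le> M" unfolding M_def using sn sc0
            by (intro divide_left_mono mult_pos_pos power_mono) auto
          finally show ?thesis .
        qed
        have u2: "(u x)^2 \<le> L * Gs" using hf(7)[OF x] by (simp add: L_def Gs_def)
        have key: "Z' x + (1 / p x) * (Z x)^2 = - (p0 * k^2) - p0 * k^2 * E * (1 - p0 / p x)"
        proof -
          have "Z' x + (1 / p x) * (Z x)^2 = - p0 * k^2 / sn^2 + p0^2 * k^2 * cs^2 / (p x * sn^2)"
            unfolding Z'_def Z_def sn_def[symmetric] cs_def[symmetric] using px snp
            by (simp add: power_mult_distrib power_divide)
          also have "\<dots> = - p0 * k^2 * (1 / sn^2) + p0^2 * k^2 * cs^2 / (p x * sn^2)"
            by simp
          also have "1 / sn^2 = 1 + E"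
          proof -
            have "sn^2 \<noteq> 0" using snp by simp
            then have "1 / sn^2 = (sn^2 + cs^2) / sn^2" using e by simp
            also have "\<dots> = 1 + E" unfolding E_def using snp by (simp add: add_divide_distrib)
            finally show ?thesis .
          qed
          also have "- p0 * k^2 * (1 + E) + p0^2 * k^2 * cs^2 / (p x * sn^2) = - (p0 * k^2) - p0 * k^2 * E * (1 - p0 / p x)"
          proof -
            have "p x \<noteq> 0" "sn \<noteq> 0" using px snp by auto
            then show ?thesis unfolding E_def by (simp add: field_simps power2_eq_square)
          qed
          finally show ?thesis .
        qed
        have "- p0 * k^2 * E * (1 - p0 / p x) \<le> p0 * k^2 * E * \<bar>1 - p0 / p x\<bar>"
        proof -
          have nn: "0 \<le> p0 * k^2 * E" using p0 E0 by simp
          have "- (1 - p0 / p x) \<le> \<bar>1 - p0 / p x\<bar>" by simp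
          then have "p0 * k^2 * E * (- (1 - p0 / p x)) \<le> p0 * k^2 * E * \<bar>1 - p0 / p x\<bar>" by (rule mult_left_mono[OF _ nn])
          moreover have "- p0 * k^2 * E * (1 - p0 / p x) = p0 * k^2 * E * (- (1 - p0 / p x))" by (simp only: mult_minus_right mult_minus_left)
          ultimately show ?thesis by linarith
        qed
        also have "\<dots> \<le> p0 * k^2 * M * (\<beta> * \<bar>p x - p0\<bar>)"
          using p0 E0 EM r by (intro mult_mono mult_left_mono) auto
        finally have bd: "Z' x + (1 / p x) * (Z x)^2 \<le> - (p0 * k^2) + p0 * k^2 * M * (\<beta> * \<bar>p x - p0\<bar>)"
          using key by simp
        have "Z' x * (u x)^2 + (1 / p x) * ((Z x)^2 * (u x)^2) = (Z' x + (1 / p x) * (Z x)^2) * (u x)^2"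
          by (simp add: algebra_simps)
        also have "\<dots> \<le> (- (p0 * k^2) + p0 * k^2 * M * (\<beta> * \<bar>p x - p0\<bar>)) * (u x)^2"
          using bd by (intro mult_right_mono) auto
        also have "\<dots> = (- (p0 * k^2)) * (u x)^2 + (p0 * k^2 * M * \<beta> * \<bar>p x - p0\<bar>) * (u x)^2"
          by (simp add: algebra_simps)
        also have "\<dots> \<le> (- (p0 * k^2)) * (u x)^2 + (p0 * k^2 * M * \<beta> * \<bar>p x - p0\<bar>) * (L * Gs)"
          using u2 p0 beta sc0 by (intro add_left_mono mult_left_mono) (auto simp: M_def)
        also have "\<dots> = (- (p0 * k^2)) * (u x)^2 + C * \<bar>p x - p0\<bar>"
          by (simp add: C_def)
        finally show "Z' x * (u x)^2 + (1 / p x) * ((Z x)^2 * (u x)^2) \<le> (- (p0 * k^2)) * (u x)^2 + C * \<bar>p x - p0\<bar>" .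
      qed
    qed
  qed
  also have "(LINT x:{a..b}|lebesgue. (- (p0 * k^2)) * (u x)^2 + C * \<bar>p x - p0\<bar>)
      = (- (p0 * k^2)) * (LINT x:{a..b}|lebesgue. (u x)^2) + C * (LINT x:{a..b}|lebesgue. \<bar>p x - p0\<bar>)"
  proof -
    have i1: "set_integrable lebesgue {a..b} (\<lambda>x. (- (p0 * k^2)) * (u x)^2)" using S by (rule set_integrable_mult_right)
    have i2: "set_integrable lebesgue {a..b} (\<lambda>x. C * \<bar>p x - p0\<bar>)" using A by (rule set_integrable_mult_right)
    show ?thesis by (simp only: set_integral_add(2)[OF i1 i2] set_integral_mult_right)
  qed
  finally have "p0 * k^2 * (LINT x:{a..b}|lebesgue. (u x)^2) - C * (LINT x:{a..b}|lebesgue. \<bar>p x - p0\<bar>)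
      \<le> (LINT x:{a..b}|lebesgue. p x * (g x)^2)" using ric by simp
  then show ?thesis by (simp add: C_def k_def M_def c0_def L_def Gs_def)
qed

lemma lp_eventually:
  assumes "lebesgue_point f x0" "0 < e"
  shows "\<exists>r0>0. \<forall>r. 0 < r \<and> r < r0 \<longrightarrow> (1 / (2 * r)) * (LINT t:{x0 - r..x0 + r}|lebesgue. \<bar>f t - f x0\<bar>) < e"
proof -
  have "\<forall>\<^sub>F r in at_right 0. dist ((1 / (2 * r)) * (LINT t:{x0 - r..x0 + r}|lebesgue. \<bar>f t - f x0\<bar>)) 0 < e"
    using assms unfolding lebesgue_point_def tendsto_iff by blast
  then obtain r0 where r0: "r0 > 0" "\<forall>r>0. r < r0 \<longrightarrow> dist ((1 / (2 * r)) * (LINT t:{x0 - r..x0 + r}|lebesgue. \<bar>f t - f x0\<bar>)) 0 < e"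
    unfolding eventually_at_right_field by auto
  show ?thesis
  proof (rule exI[of _ r0], intro conjI allI impI)
    fix r assume r: "0 < r \<and> r < r0"
    let ?X = "(LINT t:{x0 - r..x0 + r}|lebesgue. \<bar>f t - f x0\<bar>)"
    have "\<bar>(1 / (2 * r)) * ?X\<bar> < e" using r0(2) r by (auto simp: dist_real_def)
    then show "(1 / (2 * r)) * ?X < e" by linarith
  qed (use r0 in auto)
qed

lemma lp_bounds:
  fixes f :: "real \<Rightarrow> real"
  assumes lp: "lebesgue_point f x0" and fm: "f \<in> borel_measurable lebesgue"
    and fb: "AE x in lebesgue. lo \<le> f x \<and> f x \<le> hi"
  shows "lo \<le> f x0 \<and> f x0 \<le> hi"
proof (rule ccontr)
  assume "\<not> (lo \<le> f x0 \<and> f x0 \<le> hi)"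
  then obtain d where d: "0 < d" "AE x in lebesgue. d \<le> \<bar>f x - f x0\<bar>"
  proof (cases "f x0 < lo")
    case True
    have "AE x in lebesgue. lo - f x0 \<le> \<bar>f x - f x0\<bar>" using fb by eventually_elim auto
    then show ?thesis using True by (intro that[of "lo - f x0"]) auto
  next
    case False
    then have "hi < f x0" using \<open>\<not> (lo \<le> f x0 \<and> f x0 \<le> hi)\<close> by auto
    have h: "hi < f x0" by fact
    have "AE x in lebesgue. f x0 - hi \<le> \<bar>f x - f x0\<bar>" using fb by eventually_elim auto
    then show ?thesis using h by (intro that[of "f x0 - hi"]) auto
  qed
  have fbd: "AE x in lebesgue. \<bar>f x\<bar> \<le> \<bar>lo\<bar> + \<bar>hi\<bar>" using fb by eventually_elim auto
  obtain r0 where r0: "r0 > 0" "\<forall>r. 0 < r \<and> r < r0 \<longrightarrow> (1 / (2 * r)) * (LINT t:{x0 - r..x0 + r}|lebesgue. \<bar>f t - f x0\<bar>) < d"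
    using lp_eventually[OF lp d(1)] by blast
  define r where "r = r0 / 2"
  have r: "0 < r" "r < r0" using r0 by (auto simp: r_def)
  have "(LINT t:{x0 - r..x0 + r}|lebesgue. d) \<le> (LINT t:{x0 - r..x0 + r}|lebesgue. \<bar>f t - f x0\<bar>)"
    using d(2) by (intro set_integral_mono_AE set_integrable_const_Icc absdiff_integrable[OF fm fbd]) (auto elim!: AE_mp)
  moreover have "(LINT t:{x0 - r..x0 + r}|lebesgue. d) = 2 * r * d" using r by (subst set_integral_const_Icc) auto
  ultimately have "d \<le> (1 / (2 * r)) * (LINT t:{x0 - r..x0 + r}|lebesgue. \<bar>f t - f x0\<bar>)"
    using r by (simp add: field_simps)
  with r0(2) r show False by force
qed

lemma lp_interval:
  fixes f :: "real \<Rightarrow> real"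
  assumes lp: "lebesgue_point f x0" and fm: "f \<in> borel_measurable lebesgue"
    and fbd: "AE x in lebesgue. \<bar>f x\<bar> \<le> C" and e: "0 < e"
  shows "\<exists>r0>0. \<forall>a b. a < b \<and> a \<le> x0 \<and> x0 \<le> b \<and> b - a < r0 \<longrightarrow>
            (LINT t:{a..b}|lebesgue. \<bar>f t - f x0\<bar>) \<le> 2 * (b - a) * e"
proof -
  obtain r0 where r0: "r0 > 0" "\<forall>r. 0 < r \<and> r < r0 \<longrightarrow> (1 / (2 * r)) * (LINT t:{x0 - r..x0 + r}|lebesgue. \<bar>f t - f x0\<bar>) < e"
    using lp_eventually[OF lp e] by blast
  show ?thesis
  proof (intro exI[of _ r0] conjI allI impI)
    fix a b assume ab: "a < b \<and> a \<le> x0 \<and> x0 \<le> b \<and> b - a < r0"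
    define L where "L = b - a"
    have L: "0 < L" "L < r0" using ab by (auto simp: L_def)
    have i1: "set_integrable lebesgue {a..b} (\<lambda>t. \<bar>f t - f x0\<bar>)" by (rule absdiff_integrable[OF fm fbd])
    have i2: "set_integrable lebesgue {x0 - L..x0 + L} (\<lambda>t. \<bar>f t - f x0\<bar>)" by (rule absdiff_integrable[OF fm fbd])
    have "(LINT t:{a..b}|lebesgue. \<bar>f t - f x0\<bar>) \<le> (LINT t:{x0 - L..x0 + L}|lebesgue. \<bar>f t - f x0\<bar>)"
      unfolding set_lebesgue_integral_def
    proof (rule integral_mono)
      show "integrable lebesgue (\<lambda>x. indicator {a..b} x *\<^sub>R \<bar>f x - f x0\<bar>)" using i1 by (simp add: set_integrable_def)
      show "integrable lebesgue (\<lambda>x. indicator {x0 - L..x0 + L} x *\<^sub>R \<bar>f x - f x0\<bar>)" using i2 by (simp add: set_integrable_def)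
      fix t show "indicator {a..b} t *\<^sub>R \<bar>f t - f x0\<bar> \<le> indicator {x0 - L..x0 + L} t *\<^sub>R \<bar>f t - f x0\<bar>"
        using ab by (auto simp: indicator_def L_def)
    qed
    also have "\<dots> = 2 * L * ((1 / (2 * L)) * (LINT t:{x0 - L..x0 + L}|lebesgue. \<bar>f t - f x0\<bar>))"
      using L by simp
    also have "\<dots> \<le> 2 * L * e"
      using r0(2) L by (intro mult_left_mono) (auto intro: less_imp_le)
    finally show "(LINT t:{a..b}|lebesgue. \<bar>f t - f x0\<bar>) \<le> 2 * (b - a) * e" by (simp add: L_def)
  qed (use r0 in auto)
qed

lemma cont_borel_leb:
  fixes f :: "real \<Rightarrow> real"
  assumes "continuous_on UNIV f"
  shows "f \<in> borel_measurable lebesgue"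
  by (rule measurable_completion) (use assms borel_measurable_continuous_onI in auto)

lemma sin_test_H10:
  fixes a b :: real
  assumes ab: "a < b"
  defines "k \<equiv> pi / (b - a)"
  shows "((\<lambda>x. sin (k * (x - a))), (\<lambda>x. k * cos (k * (x - a)))) \<in> H10 a b"
proof -
  have c: "continuous_on UNIV (\<lambda>x. k * cos (k * (x - a)))" by (intro continuous_intros)
  have i: "set_integrable lebesgue {a..b} (\<lambda>x. k * cos (k * (x - a)))"
    by (rule cont_set_integrable) (intro continuous_intros)
  have i2: "set_integrable lebesgue {a..b} (\<lambda>x. (k * cos (k * (x - a)))^2)"
    by (rule cont_set_integrable) (intro continuous_intros)
  have ftc: "sin (k * (x - a)) = (LINT t:{a..x}|lebesgue. k * cos (k * (t - a)))" if "x \<in> {a..b}" for x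
  proof -
    have "(LINT t:{a..x}|lebesgue. k * cos (k * (t - a))) = sin (k * (x - a)) - sin (k * (a - a))"
      using that by (intro FTC_leb) (auto intro!: derivative_eq_intros continuous_intros)
    then show ?thesis by simp
  qed
  have sb: "sin (k * (b - a)) = 0" using ab by (simp add: k_def)
  have i': "set_integrable lebesgue {a<..<b} (\<lambda>x. k * cos (k * (x - a)))" using i Ioo_Icc_integrable by blast
  have i2': "set_integrable lebesgue {a<..<b} (\<lambda>x. (k * cos (k * (x - a)))^2)" using i2 Ioo_Icc_integrable by blast
  show ?thesis unfolding H10_def mem_Collect_eq case_prod_conv
    using cont_borel_leb[OF c] i' i2' ftc sb by blast
qed

lemma int_cos2:
  fixes a b k :: real
  assumes ab: "a \<le> b" and k: "k \<noteq> 0" and kb: "sin (2 * k * (b - a)) = 0"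
  shows "(LINT x:{a..b}|lebesgue. (cos (k * (x - a)))^2) = (b - a) / 2"
    and "(LINT x:{a..b}|lebesgue. (sin (k * (x - a)))^2) = (b - a) / 2"
proof -
  have d1: "((\<lambda>x. (x - a) / 2 + sin (2 * k * (x - a)) / (4 * k)) has_real_derivative (cos (k * (x - a)))^2) (at x within {a..b})" for x
  proof -
    have "((\<lambda>x. (x - a) / 2 + sin (2 * k * (x - a)) / (4 * k)) has_real_derivative 1 / 2 + cos (2 * k * (x - a)) * (2 * k * 1) / (4 * k)) (at x within {a..b})"
      by (auto intro!: derivative_eq_intros)
    moreover have "1 / 2 + cos (2 * k * (x - a)) * (2 * k * 1) / (4 * k) = (cos (k * (x - a)))^2"
    proof -
      have e: "cos (2*k*(x-a)) = 2*(cos(k*(x-a)))^2 - 1"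
        using cos_double_cos[of "k*(x-a)"] by (simp add: mult.assoc)
      have "1/2 + (2*(cos(k*(x-a)))^2 - 1)*(2*k*1)/(4*k) = (cos(k*(x-a)))^2"
        using k by (simp add: field_simps)
      then show ?thesis by (simp only: e)
    qed
    ultimately show ?thesis by simp
  qed
  have d2: "((\<lambda>x. (x - a) / 2 - sin (2 * k * (x - a)) / (4 * k)) has_real_derivative (sin (k * (x - a)))^2) (at x within {a..b})" for x
  proof -
    have "((\<lambda>x. (x - a) / 2 - sin (2 * k * (x - a)) / (4 * k)) has_real_derivative 1 / 2 - cos (2 * k * (x - a)) * (2 * k * 1) / (4 * k)) (at x within {a..b})"
      by (auto intro!: derivative_eq_intros)
    moreover have "1 / 2 - cos (2 * k * (x - a)) * (2 * k * 1) / (4 * k) = (sin (k * (x - a)))^2"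
    proof -
      have e: "cos (2*k*(x-a)) = 1 - 2*(sin(k*(x-a)))^2"
        using cos_double_sin[of "k*(x-a)"] by (simp add: mult.assoc)
      have "1/2 - (1 - 2*(sin(k*(x-a)))^2)*(2*k*1)/(4*k) = (sin(k*(x-a)))^2"
        using k by (simp add: field_simps)
      then show ?thesis by (simp only: e)
    qed
    ultimately show ?thesis by simp
  qed
  show "(LINT x:{a..b}|lebesgue. (cos (k * (x - a)))^2) = (b - a) / 2"
    by (subst FTC_leb[OF ab d1]) (auto intro!: continuous_intros simp: kb)
  show "(LINT x:{a..b}|lebesgue. (sin (k * (x - a)))^2) = (b - a) / 2"
    by (subst FTC_leb[OF ab d2]) (auto intro!: continuous_intros simp: kb)
qed

lemma bc_integrable:
  fixes f h :: "real \<Rightarrow> real"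
  assumes f: "f \<in> borel_measurable lebesgue" and bd: "AE x in lebesgue. \<bar>f x\<bar> \<le> C"
    and h: "continuous_on {a..b} h"
  shows "set_integrable lebesgue {a..b} (\<lambda>x. f x * h x)"
  by (rule bounded_mult_set_integrable[OF cont_set_integrable[OF h] f cont_measurable_leb[OF h] bd])

lemma set_integral_nonneg_AE':
  fixes f :: "real \<Rightarrow> real"
  assumes "AE x in lebesgue. 0 \<le> f x"
  shows "0 \<le> (LINT x:A|lebesgue. f x)"
  unfolding set_lebesgue_integral_def
  by (rule integral_nonneg_AE) (use assms in \<open>auto simp: indicator_def elim!: AE_mp\<close>)

lemma rayleigh_Icc:
  "rayleigh p q w a b u g = ((LINT x:{a..b}|lebesgue. p x * (g x)^2) + (LINT x:{a..b}|lebesgue. q x * (u x)^2))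
      / (LINT x:{a..b}|lebesgue. w x * (u x)^2)"
  unfolding rayleigh_def by (simp add: Ioo_Icc_integral)

lemma rayleigh_nonneg:
  assumes "AE x in lebesgue. 0 \<le> p x" "AE x in lebesgue. 0 \<le> q x" "AE x in lebesgue. 0 \<le> w x"
  shows "0 \<le> rayleigh p q w a b u g"
  unfolding rayleigh_def
  by (intro divide_nonneg_nonneg add_nonneg_nonneg set_integral_nonneg_AE')
     (use assms in \<open>auto elim!: AE_mp\<close>)

lemma lambda_le:
  assumes nn: "AE x in lebesgue. 0 \<le> p x" "AE x in lebesgue. 0 \<le> q x" "AE x in lebesgue. 0 \<le> w x"
    and ug: "(u, g) \<in> H10 a b" and nz: "\<exists>x\<in>{a<..<b}. u x \<noteq> 0"
  shows "lambdaJ p q w a b \<le> rayleigh p q w a b u g"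
  unfolding lambdaJ_def
proof (rule cInf_lower)
  show "rayleigh p q w a b u g \<in> {rayleigh p q w a b u g |u g. (u, g) \<in> H10 a b \<and> (\<exists>x\<in>{a<..<b}. u x \<noteq> 0)}"
    using ug nz by blast
  show "bdd_below {rayleigh p q w a b u g |u g. (u, g) \<in> H10 a b \<and> (\<exists>x\<in>{a<..<b}. u x \<noteq> 0)}"
    by (rule bdd_belowI[of _ 0]) (use rayleigh_nonneg[OF nn] in auto)
qed

lemma lambda_ge:
  assumes ab: "a < b"
    and H: "\<And>u g. (u, g) \<in> H10 a b \<Longrightarrow> (\<exists>x\<in>{a<..<b}. u x \<noteq> 0) \<Longrightarrow> c \<le> rayleigh p q w a b u g"
  shows "c \<le> lambdaJ p q w a b"
  unfolding lambdaJ_def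
proof (rule cInf_greatest)
  define k where "k = pi / (b - a)"
  have "((\<lambda>x. sin (k * (x - a))), (\<lambda>x. k * cos (k * (x - a)))) \<in> H10 a b"
    unfolding k_def by (rule sin_test_H10[OF ab])
  moreover have "(a + b) / 2 \<in> {a<..<b}" "sin (k * ((a + b) / 2 - a)) \<noteq> 0"
  proof -
    show "(a + b) / 2 \<in> {a<..<b}" using ab by auto
    have "k * ((a + b) / 2 - a) = pi / 2" using ab by (simp add: k_def field_simps)
    then show "sin (k * ((a + b) / 2 - a)) \<noteq> 0" by simp
  qed
  ultimately show "{rayleigh p q w a b u g |u g. (u, g) \<in> H10 a b \<and> (\<exists>x\<in>{a<..<b}. u x \<noteq> 0)} \<noteq> {}"
    by blast
qed (use H in auto)

lemma upper_quant:
  fixes p q w :: "real \<Rightarrow> real"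
  assumes ab: "a < b" and beta: "0 < \<beta>"
    and pm: "p \<in> borel_measurable lebesgue" and qm: "q \<in> borel_measurable lebesgue"
    and wm: "w \<in> borel_measurable lebesgue"
    and qb: "AE x in lebesgue. 0 \<le> q x \<and> q x \<le> \<beta>"
    and pb: "AE x in lebesgue. 0 \<le> p x \<and> p x \<le> \<beta>"
    and wb: "AE x in lebesgue. 0 \<le> w x \<and> w x \<le> \<beta>"
    and hw: "(LINT x:{a..b}|lebesgue. \<bar>w x - w0\<bar>) < w0 * (b - a) / 2"
  shows "lambdaJ p q w a b \<le>
     (p0 * (pi / (b - a))^2 * (b - a) / 2 + (pi / (b - a))^2 * (LINT x:{a..b}|lebesgue. \<bar>p x - p0\<bar>) + \<beta> * (b - a))
     / (w0 * (b - a) / 2 - (LINT x:{a..b}|lebesgue. \<bar>w x - w0\<bar>))"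
proof -
  define k where "k = pi / (b - a)"
  define L where "L = b - a"
  define u where "u x = sin (k * (x - a))" for x
  define g where "g x = k * cos (k * (x - a))" for x
  define ep where "ep = (LINT x:{a..b}|lebesgue. \<bar>p x - p0\<bar>)"
  define ew where "ew = (LINT x:{a..b}|lebesgue. \<bar>w x - w0\<bar>)"
  have L: "0 < L" using ab by (simp add: L_def)
  have k: "k \<noteq> 0" using ab by (simp add: k_def)
  have kb: "sin (2 * k * (b - a)) = 0"
  proof -
    have "2 * k * (b - a) = real 2 * pi" using ab by (simp add: k_def)
    then show ?thesis by (simp only: sin_npi)
  qed
  note ic = int_cos2[OF less_imp_le[OF ab] k kb]
  have ug: "(u, g) \<in> H10 a b" unfolding u_def g_def k_def by (rule sin_test_H10[OF ab])
  have nz: "\<exists>x\<in>{a<..<b}. u x \<noteq> 0"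
  proof
    show "(a + b) / 2 \<in> {a<..<b}" using ab by auto
    have "k * ((a + b) / 2 - a) = pi / 2" using ab by (simp add: k_def field_simps)
    then show "u ((a + b) / 2) \<noteq> 0" by (simp add: u_def)
  qed
  have nn: "AE x in lebesgue. 0 \<le> p x" "AE x in lebesgue. 0 \<le> q x" "AE x in lebesgue. 0 \<le> w x"
    using pb qb wb by (auto elim!: AE_mp)
  have lam: "lambdaJ p q w a b \<le> rayleigh p q w a b u g" by (rule lambda_le[OF nn ug nz])
  have pbd: "AE x in lebesgue. \<bar>p x\<bar> \<le> \<beta>" using pb by (auto elim!: AE_mp)
  have qbd: "AE x in lebesgue. \<bar>q x\<bar> \<le> \<beta>" using qb by (auto elim!: AE_mp)
  have wbd: "AE x in lebesgue. \<bar>w x\<bar> \<le> \<beta>" using wb by (auto elim!: AE_mp)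
  have gc: "continuous_on {a..b} (\<lambda>x. (g x)^2)" unfolding g_def by (intro continuous_intros)
  have uc: "continuous_on {a..b} (\<lambda>x. (u x)^2)" unfolding u_def by (intro continuous_intros)
  have Pi: "set_integrable lebesgue {a..b} (\<lambda>x. p x * (g x)^2)" by (rule bc_integrable[OF pm pbd gc])
  have Qi: "set_integrable lebesgue {a..b} (\<lambda>x. q x * (u x)^2)" by (rule bc_integrable[OF qm qbd uc])
  have Wi: "set_integrable lebesgue {a..b} (\<lambda>x. w x * (u x)^2)" by (rule bc_integrable[OF wm wbd uc])
  have Ai: "set_integrable lebesgue {a..b} (\<lambda>x. \<bar>p x - p0\<bar>)" by (rule absdiff_integrable[OF pm pbd])
  have Bi: "set_integrable lebesgue {a..b} (\<lambda>x. \<bar>w x - w0\<bar>)" by (rule absdiff_integrable[OF wm wbd])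
  have G2i: "set_integrable lebesgue {a..b} (\<lambda>x. (g x)^2)" by (rule cont_set_integrable[OF gc])
  have U2i: "set_integrable lebesgue {a..b} (\<lambda>x. (u x)^2)" by (rule cont_set_integrable[OF uc])
  have intg: "(LINT x:{a..b}|lebesgue. (g x)^2) = k^2 * (L / 2)"
  proof -
    have "(LINT x:{a..b}|lebesgue. (g x)^2) = (LINT x:{a..b}|lebesgue. k^2 * (cos (k * (x - a)))^2)"
      unfolding g_def by (simp add: power_mult_distrib)
    also have "\<dots> = k^2 * (L / 2)" using ic(1) by (simp add: L_def)
    finally show ?thesis .
  qed
  have intu: "(LINT x:{a..b}|lebesgue. (u x)^2) = L / 2" using ic(2) by (simp add: u_def L_def)
  have P: "(LINT x:{a..b}|lebesgue. p x * (g x)^2) \<le> p0 * k^2 * L / 2 + k^2 * ep"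
  proof -
    have "(LINT x:{a..b}|lebesgue. p x * (g x)^2) \<le> (LINT x:{a..b}|lebesgue. p0 * (g x)^2 + k^2 * \<bar>p x - p0\<bar>)"
    proof (rule set_integral_mono)
      show "set_integrable lebesgue {a..b} (\<lambda>x. p0 * (g x)^2 + k^2 * \<bar>p x - p0\<bar>)"
        using G2i Ai by (intro set_integral_add(1) set_integrable_mult_right)
      fix x assume x: "x \<in> {a..b}"
      have c1: "(cos (k * (x - a)))^2 \<le> 1" by (simp add: abs_square_le_1)
      have "p x * (g x)^2 = p0 * (g x)^2 + (p x - p0) * (k^2 * (cos (k * (x - a)))^2)"
        unfolding g_def by (simp add: algebra_simps power_mult_distrib)
      also have "(p x - p0) * (k^2 * (cos (k * (x - a)))^2) \<le> \<bar>p x - p0\<bar> * (k^2 * 1)"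
      proof -
        have "(p x - p0) * (k^2 * (cos (k * (x - a)))^2) \<le> \<bar>p x - p0\<bar> * (k^2 * (cos (k * (x - a)))^2)"
          by (intro mult_right_mono) auto
        also have "\<dots> \<le> \<bar>p x - p0\<bar> * (k^2 * 1)"
          using c1 by (intro mult_left_mono) auto
        finally show ?thesis .
      qed
      finally show "p x * (g x)^2 \<le> p0 * (g x)^2 + k^2 * \<bar>p x - p0\<bar>" by (simp add: mult.commute)
    qed (rule Pi)
    also have "\<dots> = p0 * (k^2 * (L / 2)) + k^2 * ep"
      using G2i Ai by (simp add: set_integral_add(2) intg ep_def)
    finally show ?thesis by simp
  qed
  have Q: "(LINT x:{a..b}|lebesgue. q x * (u x)^2) \<le> \<beta> * L"
  proof -
    have "(LINT x:{a..b}|lebesgue. q x * (u x)^2) \<le> (LINT x:{a..b}|lebesgue. \<beta>)"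
    proof (rule set_integral_mono_AE[OF Qi set_integrable_const_Icc])
      show "AE x\<in>{a..b} in lebesgue. q x * (u x)^2 \<le> \<beta>"
        using qb
      proof eventually_elim
        case (elim x)
        have "(u x)^2 \<le> 1" by (simp add: u_def abs_square_le_1)
        then have "q x * (u x)^2 \<le> q x * 1" using elim by (intro mult_left_mono) auto
        then show ?case using elim by auto
      qed
    qed
    also have "\<dots> = \<beta> * L" using ab by (simp add: set_integral_const_Icc L_def)
    finally show ?thesis .
  qed
  have W: "w0 * L / 2 - ew \<le> (LINT x:{a..b}|lebesgue. w x * (u x)^2)"
  proof -
    have "(LINT x:{a..b}|lebesgue. w0 * (u x)^2 - \<bar>w x - w0\<bar>) \<le> (LINT x:{a..b}|lebesgue. w x * (u x)^2)"
    proof (rule set_integral_mono)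
      show "set_integrable lebesgue {a..b} (\<lambda>x. w0 * (u x)^2 - \<bar>w x - w0\<bar>)"
        using U2i Bi by (intro set_integral_diff(1) set_integrable_mult_right)
      fix x assume x: "x \<in> {a..b}"
      have c1: "(u x)^2 \<le> 1" by (simp add: u_def abs_square_le_1)
      have "w x * (u x)^2 = w0 * (u x)^2 + (w x - w0) * (u x)^2" by (simp add: algebra_simps)
      moreover have "- \<bar>w x - w0\<bar> \<le> (w x - w0) * (u x)^2"
      proof -
        have "- \<bar>w x - w0\<bar> \<le> - (\<bar>w x - w0\<bar> * (u x)^2)" using c1 by (simp add: mult_left_le)
        also have "\<dots> \<le> (w x - w0) * (u x)^2"
        proof -
          have a: "\<bar>(w x - w0) * (u x)^2\<bar> = \<bar>w x - w0\<bar> * (u x)^2" by (simp add: abs_mult)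
          have b: "- \<bar>(w x - w0) * (u x)^2\<bar> \<le> (w x - w0) * (u x)^2" by arith
          show ?thesis using a b by simp
        qed
        finally show ?thesis .
      qed
      ultimately show "w0 * (u x)^2 - \<bar>w x - w0\<bar> \<le> w x * (u x)^2" by linarith
    qed (rule Wi)
    moreover have "(LINT x:{a..b}|lebesgue. w0 * (u x)^2 - \<bar>w x - w0\<bar>) = w0 * (L / 2) - ew"
      using U2i Bi by (simp add: set_integral_diff(2) intu ew_def)
    ultimately show ?thesis by simp
  qed
  have Wpos: "0 < w0 * L / 2 - ew" using hw by (simp add: ew_def L_def)
  have num_nn: "0 \<le> (LINT x:{a..b}|lebesgue. p x * (g x)^2) + (LINT x:{a..b}|lebesgue. q x * (u x)^2)"
    by (intro add_nonneg_nonneg set_integral_nonneg_AE') (use nn in \<open>auto elim!: AE_mp\<close>)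
  have "rayleigh p q w a b u g \<le> (p0 * k^2 * L / 2 + k^2 * ep + \<beta> * L) / (w0 * L / 2 - ew)"
    unfolding rayleigh_Icc
    by (rule frac_le) (use num_nn P Q W Wpos in auto)
  with lam show ?thesis by (simp add: k_def L_def ep_def ew_def)
qed

lemma S_pos:
  fixes u :: "real \<Rightarrow> real"
  assumes ab: "a < b" and uc: "continuous_on {a..b} u" and nz: "\<exists>x\<in>{a<..<b}. u x \<noteq> 0"
  shows "0 < (LINT x:{a..b}|lebesgue. (u x)^2)"
proof -
  have c: "continuous_on {a..b} (\<lambda>x. (u x)^2)" by (intro continuous_intros uc)
  have i: "set_integrable lebesgue {a..b} (\<lambda>x. (u x)^2)" by (rule cont_set_integrable[OF c])
  have nn: "0 \<le> (LINT x:{a..b}|lebesgue. (u x)^2)" by (rule set_integral_nonneg') auto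
  obtain x1 where x1: "x1 \<in> {a<..<b}" "u x1 \<noteq> 0" using nz by blast
  show ?thesis
  proof (rule ccontr)
    assume "\<not> ?thesis"
    then have z: "(LINT x:{a..b}|lebesgue. (u x)^2) = 0" using nn by simp
    have "((\<lambda>x. (u x)^2) has_integral 0) (cbox a b)"
      using set_lebesgue_integral_eq_integral[OF i] z
      by (metis box_real(2) has_integral_integral)
    then have hi: "((\<lambda>x. (u x)^2) has_integral 0) (cbox a b)" .
    have "(u x1)^2 = 0"
    proof (rule has_integral_0_cbox_imp_0[of a b "\<lambda>x. (u x)^2" x1])
      show "continuous_on (cbox a b) (\<lambda>x. (u x)^2)" using c by simp
      show "\<And>x. x \<in> box a b \<Longrightarrow> 0 \<le> (u x)^2" by simp
      show "((\<lambda>x. (u x)^2) has_integral 0) (cbox a b)" by (rule hi)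
      show "box a b \<noteq> {}" using ab by simp
      show "x1 \<in> cbox a b" using x1 by simp
    qed
    with x1 show False by simp
  qed
qed

lemma lower_quant:
  fixes p q w :: "real \<Rightarrow> real"
  assumes ab: "a < b" and beta: "0 < \<beta>"
    and pm: "p \<in> borel_measurable lebesgue" and qm: "q \<in> borel_measurable lebesgue"
    and wm: "w \<in> borel_measurable lebesgue"
    and qb: "AE x in lebesgue. 0 \<le> q x \<and> q x \<le> \<beta>"
    and pb: "AE x in lebesgue. 1 / \<beta> \<le> p x \<and> p x \<le> \<beta>"
    and wb: "AE x in lebesgue. 1 / \<beta> \<le> w x \<and> w x \<le> \<beta>"
    and p0: "0 < p0" and w0: "0 < w0" and th: "0 < \<theta>"
  shows "1 / (w0 * (1 + p0 * (pi / ((b-a)*(1+2*\<theta>)))^2 * (1 / (sin (pi*\<theta>/(1+2*\<theta>)))^2) * \<beta>^2 * (b-a)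
                      * (LINT x:{a..b}|lebesgue. \<bar>p x - p0\<bar>)) / (p0 * (pi / ((b-a)*(1+2*\<theta>)))^2)
              + (b - a) * \<beta> * (LINT x:{a..b}|lebesgue. \<bar>w x - w0\<bar>))
         \<le> lambdaJ p q w a b"
proof (rule lambda_ge[OF ab])
  fix u g assume ug: "(u, g) \<in> H10 a b" and nz: "\<exists>x\<in>{a<..<b}. u x \<noteq> 0"
  define k where "k = pi / ((b-a)*(1+2*\<theta>))"
  define M where "M = 1 / (sin (pi*\<theta>/(1+2*\<theta>)))^2"
  define L where "L = b - a"
  define ep where "ep = (LINT x:{a..b}|lebesgue. \<bar>p x - p0\<bar>)"
  define ew where "ew = (LINT x:{a..b}|lebesgue. \<bar>w x - w0\<bar>)"
  define P where "P = (LINT x:{a..b}|lebesgue. p x * (g x)^2)"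
  define Q where "Q = (LINT x:{a..b}|lebesgue. q x * (u x)^2)"
  define W where "W = (LINT x:{a..b}|lebesgue. w x * (u x)^2)"
  define S where "S = (LINT x:{a..b}|lebesgue. (u x)^2)"
  define Gs where "Gs = (LINT x:{a..b}|lebesgue. (g x)^2)"
  define D where "D = p0 * k^2 * M * \<beta>^2 * L * ep"
  note hf = H10_facts[OF ug ab]
  have L: "0 < L" using ab by (simp add: L_def)
  have k: "0 < k" using ab th by (simp add: k_def)
  have M: "0 \<le> M" by (simp add: M_def)
  have pbd: "AE x in lebesgue. \<bar>p x\<bar> \<le> \<beta>"
    using pb by eventually_elim (use beta in \<open>smt (verit) divide_pos_pos\<close>)
  have qbd: "AE x in lebesgue. \<bar>q x\<bar> \<le> \<beta>" using qb by (auto elim!: AE_mp)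
  have wbd: "AE x in lebesgue. \<bar>w x\<bar> \<le> \<beta>"
    using wb by eventually_elim (use beta in \<open>smt (verit) divide_pos_pos\<close>)
  have ep: "0 \<le> ep" unfolding ep_def by (rule set_integral_nonneg') auto
  have ew: "0 \<le> ew" unfolding ew_def by (rule set_integral_nonneg') auto
  have D: "0 \<le> D" unfolding D_def using p0 M beta L ep by simp
  have uc: "continuous_on {a..b} u" by (rule hf(6))
  have u2c: "continuous_on {a..b} (\<lambda>x. (u x)^2)" by (intro continuous_intros uc)
  have g2m: "(\<lambda>x. indicator {a..b} x * (g x)^2) \<in> borel_measurable lebesgue"
    using hf(2) unfolding set_integrable_def by simp
  have Pi: "set_integrable lebesgue {a..b} (\<lambda>x. p x * (g x)^2)"
    by (rule bounded_mult_set_integrable[OF hf(2) pm g2m pbd])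
  have Wi: "set_integrable lebesgue {a..b} (\<lambda>x. w x * (u x)^2)" by (rule bc_integrable[OF wm wbd u2c])
  have Si: "set_integrable lebesgue {a..b} (\<lambda>x. (u x)^2)" by (rule cont_set_integrable[OF u2c])
  have Bi: "set_integrable lebesgue {a..b} (\<lambda>x. \<bar>w x - w0\<bar>)" by (rule absdiff_integrable[OF wm wbd])
  have GsP: "Gs \<le> \<beta> * P"
  proof -
    have "Gs \<le> (LINT x:{a..b}|lebesgue. \<beta> * (p x * (g x)^2))"
      unfolding Gs_def
    proof (rule set_integral_mono_AE[OF hf(2)])
      show "set_integrable lebesgue {a..b} (\<lambda>x. \<beta> * (p x * (g x)^2))" using Pi by (rule set_integrable_mult_right)
      show "AE x\<in>{a..b} in lebesgue. (g x)^2 \<le> \<beta> * (p x * (g x)^2)"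
        using pb
      proof eventually_elim
        case (elim x)
        have "1 \<le> \<beta> * p x" using elim beta by (simp add: field_simps)
        then have "1 * (g x)^2 \<le> (\<beta> * p x) * (g x)^2" by (intro mult_right_mono) auto
        then show ?case by (simp add: mult_ac)
      qed
    qed
    then show ?thesis by (simp add: P_def)
  qed
  have core: "p0 * k^2 * S - p0 * k^2 * M * \<beta> * L * Gs * ep \<le> P"
    using lower_core[OF ab ug pm pb beta p0 th]
    by (simp add: k_def M_def L_def S_def Gs_def ep_def P_def)
  have "p0 * k^2 * M * \<beta> * L * Gs * ep \<le> p0 * k^2 * M * \<beta> * L * (\<beta> * P) * ep"
    using GsP p0 M beta L ep by (intro mult_right_mono mult_left_mono) auto
  also have "\<dots> = D * P" by (simp add: D_def power2_eq_square mult_ac)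
  finally have SP: "p0 * k^2 * S \<le> (1 + D) * P" using core by (simp add: algebra_simps)
  have WS: "W \<le> w0 * S + L * Gs * ew"
  proof -
    have "W \<le> (LINT x:{a..b}|lebesgue. w0 * (u x)^2 + (L * Gs) * \<bar>w x - w0\<bar>)"
      unfolding W_def
    proof (rule set_integral_mono[OF Wi])
      show "set_integrable lebesgue {a..b} (\<lambda>x. w0 * (u x)^2 + (L * Gs) * \<bar>w x - w0\<bar>)"
        using Si Bi by (intro set_integral_add(1) set_integrable_mult_right)
      fix x assume x: "x \<in> {a..b}"
      have u2: "(u x)^2 \<le> L * Gs" using hf(7)[OF x] by (simp add: L_def Gs_def)
      have "w x * (u x)^2 = w0 * (u x)^2 + (w x - w0) * (u x)^2" by (simp add: algebra_simps)
      also have "(w x - w0) * (u x)^2 \<le> \<bar>w x - w0\<bar> * (u x)^2" by (intro mult_right_mono) auto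
      also have "\<bar>w x - w0\<bar> * (u x)^2 \<le> \<bar>w x - w0\<bar> * (L * Gs)" using u2 by (intro mult_left_mono) auto
      finally show "w x * (u x)^2 \<le> w0 * (u x)^2 + (L * Gs) * \<bar>w x - w0\<bar>" by (simp add: mult_ac)
    qed
    also have "\<dots> = w0 * S + L * Gs * ew"
    proof -
      have i1: "set_integrable lebesgue {a..b} (\<lambda>x. w0 * (u x)^2)" using Si by (rule set_integrable_mult_right)
      have i2: "set_integrable lebesgue {a..b} (\<lambda>x. (L * Gs) * \<bar>w x - w0\<bar>)" using Bi by (rule set_integrable_mult_right)
      show ?thesis by (simp only: set_integral_add(2)[OF i1 i2] set_integral_mult_right S_def ew_def)
    qed
    finally show ?thesis .
  qed
  have Spos: "0 < S" unfolding S_def by (rule S_pos[OF ab uc nz])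
  have Wpos: "0 < W"
  proof -
    have "(LINT x:{a..b}|lebesgue. (1/\<beta>) * (u x)^2) \<le> W"
      unfolding W_def
    proof (rule set_integral_mono_AE[OF _ Wi])
      show "set_integrable lebesgue {a..b} (\<lambda>x. (1/\<beta>) * (u x)^2)" using Si by (rule set_integrable_mult_right)
      show "AE x\<in>{a..b} in lebesgue. (1/\<beta>) * (u x)^2 \<le> w x * (u x)^2"
        using wb
      proof eventually_elim
        case (elim x)
        have "(1/\<beta>) * (u x)^2 \<le> w x * (u x)^2" using elim by (intro mult_right_mono) auto
        then show ?case by blast
      qed
    qed
    moreover have "0 < (LINT x:{a..b}|lebesgue. (1/\<beta>) * (u x)^2)"
      using Spos beta by (simp add: S_def)
    ultimately show ?thesis by simp
  qed
  have Gs0: "0 \<le> Gs" unfolding Gs_def by (rule set_integral_nonneg') auto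
  have P0: "0 \<le> P" using GsP Gs0 beta by (smt (verit) mult_pos_pos zero_le_mult_iff)
  have Q0: "0 \<le> Q" unfolding Q_def by (rule set_integral_nonneg_AE') (use qb in \<open>auto elim!: AE_mp\<close>)
  define K where "K = w0 * (1 + D) / (p0 * k^2) + L * \<beta> * ew"
  have pk: "0 < p0 * k^2" using p0 k by simp
  have "S \<le> (1 + D) * P / (p0 * k^2)" using SP pk by (simp add: field_simps)
  then have "W \<le> w0 * ((1 + D) * P / (p0 * k^2)) + L * (\<beta> * P) * ew"
    using WS w0 GsP L ew by (smt (verit, best) mult_left_mono mult_right_mono zero_le_mult_iff)
  also have "\<dots> = K * P" by (simp add: K_def field_simps)
  finally have WK: "W \<le> K * P" .
  have Kpos: "0 < K" unfolding K_def using w0 D pk L beta ew p0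
    by (intro add_pos_nonneg divide_pos_pos mult_pos_pos mult_nonneg_nonneg) auto
  have "1 / K \<le> P / W"
    using WK Kpos Wpos by (simp add: field_simps)
  also have "P / W \<le> (P + Q) / W" using Q0 Wpos by (simp add: divide_right_mono)
  also have "(P + Q) / W = rayleigh p q w a b u g" by (simp add: rayleigh_Icc P_def Q_def W_def)
  finally show "1 / (w0 * (1 + p0 * (pi / ((b-a)*(1+2*\<theta>)))^2 * (1 / (sin (pi*\<theta>/(1+2*\<theta>)))^2) * \<beta>^2 * (b-a)
                      * (LINT x:{a..b}|lebesgue. \<bar>p x - p0\<bar>)) / (p0 * (pi / ((b-a)*(1+2*\<theta>)))^2)
              + (b - a) * \<beta> * (LINT x:{a..b}|lebesgue. \<bar>w x - w0\<bar>)) \<le> rayleigh p q w a b u g"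
    by (simp add: K_def D_def k_def M_def L_def ep_def ew_def)
qed

lemma meas_Ioo: "a \<le> b \<Longrightarrow> measure lebesgue {a<..<b} = b - (a::real)"
  by (simp add: measure_completion)

lemma upper_alg:
  fixes L ep ew e p0 w0 \<beta> :: real
  assumes L: "0 < L" and ep: "0 \<le> ep" "ep \<le> 2 * L * e" and ew: "ew \<le> 2 * L * e"
    and Le: "L^2 \<le> e" and den: "0 < w0 / 2 - 2 * e" and p0: "0 < p0" and beta: "0 < \<beta>"
  shows "(p0 * (pi / L)^2 * L / 2 + (pi / L)^2 * ep + \<beta> * L) / (w0 * L / 2 - ew) * L^2
          \<le> (p0 * pi^2 / 2 + 2 * pi^2 * e + \<beta> * e) / (w0 / 2 - 2 * e)"
proof -
  have eq: "(p0 * (pi / L)^2 * L / 2 + (pi / L)^2 * ep + \<beta> * L) / (w0 * L / 2 - ew) * L^2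
      = (p0 * pi^2 / 2 + pi^2 * (ep / L) + \<beta> * L^2) / (w0 / 2 - ew / L)"
  proof -
    have L0: "L \<noteq> 0" using L by simp
    have "(p0 * (pi / L)^2 * L / 2 + (pi / L)^2 * ep + \<beta> * L) * L = p0 * pi^2 / 2 + pi^2 * (ep / L) + \<beta> * L^2"
      using L0 by (simp add: field_simps power2_eq_square)
    moreover have "(w0 * L / 2 - ew) / L = w0 / 2 - ew / L" using L0 by (simp add: field_simps)
    moreover have "\<And>N Dn::real. N / Dn * L^2 = (N * L) / (Dn / L)" using L0 by (simp add: power2_eq_square)
    ultimately show ?thesis by metis
  qed
  have e1: "ep / L \<le> 2 * e" using ep L by (simp add: field_simps)
  have e2: "ew / L \<le> 2 * e" using ew L by (simp add: field_simps)
  have "(p0 * pi^2 / 2 + pi^2 * (ep / L) + \<beta> * L^2) / (w0 / 2 - ew / L)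
      \<le> (p0 * pi^2 / 2 + 2 * pi^2 * e + \<beta> * e) / (w0 / 2 - 2 * e)"
  proof (rule frac_le)
    show "0 \<le> p0 * pi^2 / 2 + 2 * pi^2 * e + \<beta> * e"
    proof -
      have "0 \<le> ep / L" using ep L by simp
      then have "0 \<le> e" using e1 by simp
      then show ?thesis using p0 beta by simp
    qed
    show "p0 * pi^2 / 2 + pi^2 * (ep / L) + \<beta> * L^2 \<le> p0 * pi^2 / 2 + 2 * pi^2 * e + \<beta> * e"
    proof -
      have "pi^2 * (ep / L) \<le> pi^2 * (2 * e)" by (rule mult_left_mono[OF e1]) simp
      moreover have "\<beta> * L^2 \<le> \<beta> * e" by (rule mult_left_mono[OF Le]) (use beta in simp)
      ultimately show ?thesis by simp
    qed
  qed (use den e2 in auto)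
  then show ?thesis using eq by simp
qed

lemma lower_alg:
  fixes L ep ew e p0 w0 \<beta> \<theta> M :: real
  assumes L: "0 < L" and ep: "0 \<le> ep" "ep \<le> 2 * L * e" and ew: "0 \<le> ew" "ew \<le> 2 * L * e"
    and p0: "0 < p0" and w0: "0 < w0" and beta: "0 < \<beta>" and th: "0 < \<theta>" and M: "0 \<le> M"
  shows "1 / (w0 * (1 + (p0 * pi^2 * M * \<beta>^2) * (2 * e)) * (1 + 2 * \<theta>)^2 / (p0 * pi^2) + \<beta> * (2 * e))
      \<le> 1 / (w0 * (1 + p0 * (pi / (L*(1+2*\<theta>)))^2 * M * \<beta>^2 * L * ep) / (p0 * (pi / (L*(1+2*\<theta>)))^2)
              + L * \<beta> * ew) * L^2"
proof -
  define D where "D = p0 * (pi / (L*(1+2*\<theta>)))^2 * M * \<beta>^2 * L * ep"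
  have D0: "0 \<le> D" unfolding D_def using p0 M ep L by simp
  have hL: "L \<noteq> 0" "1 + 2 * \<theta> \<noteq> 0" using L th by auto
  have Deq: "D = (p0 * pi^2 * M * \<beta>^2) / (1 + 2 * \<theta>)^2 * (ep / L)"
    unfolding D_def using hL by (simp add: power_divide power_mult_distrib power2_eq_square mult_ac)
  have e1: "ep / L \<le> 2 * e" using ep L by (simp add: field_simps)
  have e2: "ew / L \<le> 2 * e" using ew L by (simp add: field_simps)
  have Dle: "D \<le> (p0 * pi^2 * M * \<beta>^2) * (2 * e)"
  proof -
    have c: "0 \<le> p0 * pi^2 * M * \<beta>^2" using p0 M by simp
    have t: "1 \<le> (1 + 2 * \<theta>)^2" by (rule one_le_power) (use th in simp)
    have "D \<le> (p0 * pi^2 * M * \<beta>^2) * (ep / L)"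
    proof -
      have r: "0 \<le> ep / L" using ep L by simp
      have "(p0 * pi^2 * M * \<beta>^2) / (1 + 2 * \<theta>)^2 \<le> (p0 * pi^2 * M * \<beta>^2) / 1"
        by (rule divide_left_mono) (use c t in auto)
      then show ?thesis unfolding Deq using r by (intro mult_right_mono) auto
    qed
    also have "\<dots> \<le> (p0 * pi^2 * M * \<beta>^2) * (2 * e)" using c e1 by (intro mult_left_mono) auto
    finally show ?thesis .
  qed
  define K where "K = w0 * (1 + D) / (p0 * (pi / (L*(1+2*\<theta>)))^2) + L * \<beta> * ew"
  have Keq: "K / L^2 = w0 * (1 + D) * (1 + 2 * \<theta>)^2 / (p0 * pi^2) + \<beta> * (ew / L)"
    unfolding K_def using hL p0 by (simp add: power_divide power_mult_distrib power2_eq_square add_divide_distrib)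
  have Kpos: "0 < K / L^2" unfolding Keq using w0 D0 p0 beta ew L hL
    by (intro add_pos_nonneg divide_pos_pos mult_pos_pos mult_nonneg_nonneg) auto
  have "K / L^2 \<le> w0 * (1 + (p0 * pi^2 * M * \<beta>^2) * (2 * e)) * (1 + 2 * \<theta>)^2 / (p0 * pi^2) + \<beta> * (2 * e)"
    unfolding Keq using Dle e2 w0 p0 beta
    by (intro add_mono divide_right_mono mult_right_mono mult_left_mono) auto
  then have "1 / (w0 * (1 + (p0 * pi^2 * M * \<beta>^2) * (2 * e)) * (1 + 2 * \<theta>)^2 / (p0 * pi^2) + \<beta> * (2 * e)) \<le> 1 / (K / L^2)"
  proof (rule divide_left_mono)
    show "0 < (w0 * (1 + (p0 * pi^2 * M * \<beta>^2) * (2 * e)) * (1 + 2 * \<theta>)^2 / (p0 * pi^2) + \<beta> * (2 * e)) * (K / L^2)"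
      using Kpos \<open>K / L^2 \<le> _\<close> by (intro mult_pos_pos) auto
  qed (use \<open>K / L^2 \<le> _\<close> in auto)
  also have "1 / (K / L^2) = 1 / K * L^2" by simp
  finally show ?thesis by (simp add: K_def D_def)
qed

lemma ev_right_ex:
  assumes "eventually P (at_right (0::real))"
  shows "\<exists>x>0. P x"
proof -
  obtain b where b: "b > 0" "\<forall>y>0. y < b \<longrightarrow> P y" using assms unfolding eventually_at_right_field by auto
  then show ?thesis by (intro exI[of _ "b/2"]) auto
qed

theorem lemma2p1:
  fixes \<beta> :: real and p q w :: "real \<Rightarrow> real" and x0 :: real
  assumes "1 < \<beta>"
    and "p \<in> borel_measurable lebesgue" and "q \<in> borel_measurable lebesgue"
    and "w \<in> borel_measurable lebesgue"
    and "AE x in lebesgue. 0 \<le> q x \<and> q x \<le> \<beta>"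
    and "AE x in lebesgue. 1 / \<beta> \<le> p x \<and> p x \<le> \<beta>"
    and "AE x in lebesgue. 1 / \<beta> \<le> w x \<and> w x \<le> \<beta>"
    and "lebesgue_point p x0" and "lebesgue_point w x0"
  shows "let s = (\<lambda>x. sqrt (w x / p x)) in
         \<forall>\<epsilon>>0. \<exists>\<delta>>0. \<forall>a b. a < b \<and> a \<le> x0 \<and> x0 \<le> b \<and> b - a < \<delta> \<longrightarrow>
           \<bar>lambdaJ p q w a b * (measure lebesgue {a<..<b})\<^sup>2 - pi\<^sup>2 / (s x0)\<^sup>2\<bar> < \<epsilon>"
proof -
  note b1 = assms(1) and pm = assms(2) and qm = assms(3) and wm = assms(4)
    and qb = assms(5) and pb = assms(6) and wb = assms(7) and lpp = assms(8) and lpw = assms(9)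
  have beta: "0 < \<beta>" using b1 by simp
  define p0 where "p0 = p x0"
  define w0 where "w0 = w x0"
  have p0b: "1 / \<beta> \<le> p0 \<and> p0 \<le> \<beta>" unfolding p0_def by (rule lp_bounds[OF lpp pm pb])
  have w0b: "1 / \<beta> \<le> w0 \<and> w0 \<le> \<beta>" unfolding w0_def by (rule lp_bounds[OF lpw wm wb])
  have ib: "0 < 1 / \<beta>" using beta by simp
  have p0: "0 < p0" using p0b ib by linarith
  have w0: "0 < w0" using w0b ib by linarith
  define T where "T = p0 * pi^2 / w0"
  have Teq: "pi^2 / (sqrt (w x0 / p x0))^2 = T"
    using p0 w0 by (simp add: T_def p0_def[symmetric] w0_def[symmetric])
  have pbd: "AE x in lebesgue. \<bar>p x\<bar> \<le> \<beta>"
    using pb by eventually_elim (use beta in \<open>smt (verit) divide_pos_pos\<close>)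
  have wbd: "AE x in lebesgue. \<bar>w x\<bar> \<le> \<beta>"
    using wb by eventually_elim (use beta in \<open>smt (verit) divide_pos_pos\<close>)
  have pb0: "AE x in lebesgue. 0 \<le> p x \<and> p x \<le> \<beta>"
    using pb by eventually_elim (use beta in \<open>smt (verit) divide_pos_pos\<close>)
  have wb0: "AE x in lebesgue. 0 \<le> w x \<and> w x \<le> \<beta>"
    using wb by eventually_elim (use beta in \<open>smt (verit) divide_pos_pos\<close>)
  show ?thesis unfolding Let_def Teq
  proof (intro allI impI)
    fix \<epsilon> :: real assume epos: "0 < \<epsilon>"
    have "((\<lambda>\<theta>. p0 * pi^2 / (w0 * (1 + 2 * \<theta>)^2)) \<longlongrightarrow> p0 * pi^2 / (w0 * (1 + 2 * 0)^2)) (at_right 0)"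
      by (intro tendsto_intros) (use w0 in auto)
    then have "((\<lambda>\<theta>. p0 * pi^2 / (w0 * (1 + 2 * \<theta>)^2)) \<longlongrightarrow> T) (at_right 0)" by (simp add: T_def)
    then have "eventually (\<lambda>\<theta>. T - \<epsilon> / 2 < p0 * pi^2 / (w0 * (1 + 2 * \<theta>)^2)) (at_right 0)"
      by (rule order_tendstoD(1)) (use epos in simp)
    then obtain \<theta> where th: "0 < \<theta>" and thb: "T - \<epsilon> / 2 < p0 * pi^2 / (w0 * (1 + 2 * \<theta>)^2)"
      using ev_right_ex by blast
    define M where "M = 1 / (sin (pi*\<theta>/(1+2*\<theta>)))^2"
    have M0: "0 \<le> M" by (simp add: M_def)
    define c where "c = p0 * pi^2 * M * \<beta>^2"
    define G where "G e = 1 / (w0 * (1 + c * (2 * e)) * (1 + 2 * \<theta>)^2 / (p0 * pi^2) + \<beta> * (2 * e))" for e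
    define F where "F e = (p0 * pi^2 / 2 + 2 * pi^2 * e + \<beta> * e) / (w0 / 2 - 2 * e)" for e
    have G0: "G 0 = p0 * pi^2 / (w0 * (1 + 2 * \<theta>)^2)" by (simp add: G_def)
    have F0: "F 0 = T" using w0 by (simp add: F_def T_def)
    have Gt: "(G \<longlongrightarrow> G 0) (at_right 0)"
      unfolding G_def using w0 p0 th by (intro tendsto_intros) (auto simp: add_pos_pos)
    have Ft: "(F \<longlongrightarrow> F 0) (at_right 0)"
      unfolding F_def using w0 by (intro tendsto_intros) auto
    have ev1: "eventually (\<lambda>e. T - \<epsilon> < G e) (at_right 0)"
      by (rule order_tendstoD(1)[OF Gt]) (use thb G0 epos in linarith)
    have ev2: "eventually (\<lambda>e. F e < T + \<epsilon>) (at_right 0)"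
      by (rule order_tendstoD(2)[OF Ft]) (use F0 epos in simp)
    have ev3: "eventually (\<lambda>e. 2 * e < w0 / 2) (at_right 0)"
    proof -
      have "((\<lambda>e::real. 2 * e) \<longlongrightarrow> 2 * 0) (at_right 0)" by (intro tendsto_intros)
      then show ?thesis by (rule order_tendstoD(2)) (use w0 in simp)
    qed
    obtain e where e: "0 < e" "T - \<epsilon> < G e" "F e < T + \<epsilon>" "2 * e < w0 / 2"
      using ev_right_ex[OF eventually_conj[OF ev1 eventually_conj[OF ev2 ev3]]] by blast
    obtain rp where rp: "rp > 0" "\<forall>a b. a < b \<and> a \<le> x0 \<and> x0 \<le> b \<and> b - a < rp \<longrightarrow>
            (LINT t:{a..b}|lebesgue. \<bar>p t - p x0\<bar>) \<le> 2 * (b - a) * e"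
      using lp_interval[OF lpp pm pbd e(1)] by blast
    obtain rw where rw: "rw > 0" "\<forall>a b. a < b \<and> a \<le> x0 \<and> x0 \<le> b \<and> b - a < rw \<longrightarrow>
            (LINT t:{a..b}|lebesgue. \<bar>w t - w x0\<bar>) \<le> 2 * (b - a) * e"
      using lp_interval[OF lpw wm wbd e(1)] by blast
    define \<delta> where "\<delta> = min (min rp rw) (sqrt e)"
    have \<delta>: "0 < \<delta>" using rp rw e by (simp add: \<delta>_def)
    show "\<exists>\<delta>>0. \<forall>a b. a < b \<and> a \<le> x0 \<and> x0 \<le> b \<and> b - a < \<delta> \<longrightarrow>
           \<bar>lambdaJ p q w a b * (measure lebesgue {a<..<b})\<^sup>2 - T\<bar> < \<epsilon>"
    proof (intro exI[of _ \<delta>] conjI allI impI \<delta>)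
      fix a b assume ab: "a < b \<and> a \<le> x0 \<and> x0 \<le> b \<and> b - a < \<delta>"
      define L where "L = b - a"
      define ep where "ep = (LINT t:{a..b}|lebesgue. \<bar>p t - p0\<bar>)"
      define ew where "ew = (LINT t:{a..b}|lebesgue. \<bar>w t - w0\<bar>)"
      have L: "0 < L" using ab by (simp add: L_def)
      have epb: "ep \<le> 2 * L * e" using rp(2) ab unfolding ep_def L_def p0_def \<delta>_def by auto
      have ewb: "ew \<le> 2 * L * e" using rw(2) ab unfolding ew_def L_def w0_def \<delta>_def by auto
      have ep0: "0 \<le> ep" unfolding ep_def by (rule set_integral_nonneg') auto
      have ew0: "0 \<le> ew" unfolding ew_def by (rule set_integral_nonneg') auto
      have Le: "L^2 \<le> e"
      proof -
        have "L < sqrt e" using ab by (simp add: L_def \<delta>_def)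
        then have "L^2 < (sqrt e)^2" using L by (intro power_strict_mono) auto
        then show ?thesis using e(1) by simp
      qed
      have meas: "measure lebesgue {a<..<b} = L" using ab by (simp add: meas_Ioo L_def)
      have hw: "ew < w0 * L / 2"
      proof -
        have "2 * L * e < L * (w0 / 2)" using e(4) L by (simp add: mult.commute)
        moreover have "ew \<le> 2 * (L * e)" using ewb by (simp add: mult.assoc)
        ultimately show ?thesis by (simp add: mult.commute)
      qed
      have up: "lambdaJ p q w a b \<le> (p0 * (pi / L)^2 * L / 2 + (pi / L)^2 * ep + \<beta> * L) / (w0 * L / 2 - ew)"
        using upper_quant[OF _ beta pm qm wm qb pb0 wb0, of a b w0 p0] ab hw
        by (simp add: L_def ep_def ew_def)
      have "lambdaJ p q w a b * L^2 \<le> (p0 * (pi / L)^2 * L / 2 + (pi / L)^2 * ep + \<beta> * L) / (w0 * L / 2 - ew) * L^2"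
        using up by (intro mult_right_mono) auto
      also have "\<dots> \<le> F e"
        unfolding F_def by (rule upper_alg[OF L ep0 epb ewb Le _ p0 beta]) (use e(4) in simp)
      finally have U: "lambdaJ p q w a b * L^2 < T + \<epsilon>" using e(3) by simp
      have lo: "1 / (w0 * (1 + p0 * (pi / (L*(1+2*\<theta>)))^2 * M * \<beta>^2 * L * ep) / (p0 * (pi / (L*(1+2*\<theta>)))^2)
              + L * \<beta> * ew) \<le> lambdaJ p q w a b"
        using lower_quant[OF _ beta pm qm wm qb pb wb p0 w0 th, of a b] ab
        by (simp add: L_def ep_def ew_def M_def)
      have "G e \<le> 1 / (w0 * (1 + p0 * (pi / (L*(1+2*\<theta>)))^2 * M * \<beta>^2 * L * ep) / (p0 * (pi / (L*(1+2*\<theta>)))^2)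
              + L * \<beta> * ew) * L^2"
        unfolding G_def c_def by (rule lower_alg[OF L ep0 epb ew0 ewb p0 w0 beta th M0])
      also have "\<dots> \<le> lambdaJ p q w a b * L^2"
        using lo by (intro mult_right_mono) auto
      finally have Lo: "T - \<epsilon> < lambdaJ p q w a b * L^2" using e(2) by simp
      show "\<bar>lambdaJ p q w a b * (measure lebesgue {a<..<b})\<^sup>2 - T\<bar> < \<epsilon>"
        using U Lo unfolding meas by linarith
    qed
  qed
qed

end
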